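(* Let $T$ be the Lr $(\mathbf a,\tau)$ interval exchange transformation with $\tau$ irreducible and $T$ satisfying the Keane Condition, and let $\alpha,\beta\in X$. (i) If $\alpha\ne\beta$, then $\alpha,\beta$ are positively asymptotic (i.e. $\alpha_i=\beta_i$ for all $i\ge N$, some $N$) if and only if there exist $i\in[n]$ (with $b^\tau_i\in D^\tau$) and $k\in\mathbb Z$ such that, with $x=b^\tau_i$, $\{\alpha,\beta\}=\{S^k\mathcal I(x),S^k\tilde{\mathcal I}(x)\}$. (ii) If $\alpha\ne\beta$, then $\alpha,\beta$ are negatively asymptotic (i.e. $\alpha_i=\beta_i$ for all $i\le -N$, some $N$) if and only if there exist $i$ with $b_i\in D$ and $k\in\mathbb Z$ such that, with $x=b_i$, $\{\alpha,\beta\}=\{S^k\mathcal I(x),S^k\tilde{\mathcal I}(x)\}$. (iii) If $\mathcal I(x)=\tilde{\mathcal I}(y)$ for some $x\in[0,1)$, $y\in(0,1]$, then $x=y$ and this common point lies in $R$. (iv) If in addition $\tau$ is fully split, then any doubly asymptotic pair $\alpha,\beta\in X$ satisfies $\alpha=\beta$. Conversely, if $\tau$ is not split, then $X$ contains a doubly asymptotic pair of distinct points.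
   Context: Fix $n\ge 2$, $[n]=\{1,\dots,n\}$, a vector $\mathbf a=(a_1,\dots,a_n)$ with all $a_i>0$ and $\sum_i a_i=1$, and a permutation $\tau$ of $[n]$. Put $b_0=0$, $b_i=\sum_{j=1}^i a_j$, $J_i=[b_{i-1},b_i)$, $\tilde J_i=(b_{i-1},b_i]$ for $i\in[n]$, and $D=\{b_1,\dots,b_{n-1}\}$. Put $b^\tau_0=0$, $b^\tau_i=\sum_{j=1}^i a_{\tau^{-1}(j)}$, $D^\tau=\{b^\tau_1,\dots,b^\tau_{n-1}\}$. The Lr $(\mathbf a,\tau)$ interval exchange transformation $T:[0,1)\to[0,1)$ and its dual $\tilde T:(0,1]\to(0,1]$ are defined by $x\mapsto x-b_{i-1}+b^\tau_{\tau(i)-1}$ for $x\in J_i$ (resp. $x\in\tilde J_i$); both are bijections. $\tau$ is irreducible if $\tau(\{1,\dots,j\})\ne\{1,\dots,j\}$ for $j=1,\dots,n-1$; split if $\tau(j+1)\ne\tau(j)+1$ for $j=1,\dots,n-1$; fully split if it is split and moreover $\tau(1)\ne\tau(n)+1$ and $\tau^{-1}(1)\ne\tau^{-1}(n)+1$. $T$ satisfies the Keane Condition if $D\cap T^k(D)=\emptyset$ for all $k\in\mathbb N$. Let $\Omega=[n]^{\mathbb Z}$ with the product topology and shift $S(\alpha)_i=\alpha_{i+1}$. The itinerary maps $\mathcal I:[0,1)\to\Omega$, $\tilde{\mathcal I}:(0,1]\to\Omega$ are $\mathcal I(x)_k=i\iff T^kx\in J_i$ and $\tilde{\mathcal I}(x)_k=i\iff\tilde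 T^kx\in\tilde J_i$ ($k\in\mathbb Z$). Let $D_\infty=\{0,1\}\cup\bigcup_{k\in\mathbb Z}T^k(D)$, $R=[0,1]\setminus D_\infty$ (the regular points), $X_0=\mathcal I(R)$, and $X=\overline{X_0}$. A pair is doubly asymptotic if it is both positively and negatively asymptotic. *)

theory Defs
  imports "HOL-Analysis.Analysis" "HOL-Combinatorics.Permutations"
begin

definition iet_b :: "(nat \<Rightarrow> real) \<Rightarrow> nat \<Rightarrow> real" where
  "iet_b a i = (\<Sum>j=1..i. a j)"

definition iet_btau :: "(nat \<Rightarrow> real) \<Rightarrow> (nat \<Rightarrow> nat) \<Rightarrow> nat \<Rightarrow> real" where
  "iet_btau a \<tau> i = (\<Sum>j=1..i. a (inv \<tau> j))"

definition iet_J :: "(nat \<Rightarrow> real) \<Rightarrow> nat \<Rightarrow> real set" where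
  "iet_J a i = {iet_b a (i - 1)..<iet_b a i}"

definition iet_Jd :: "(nat \<Rightarrow> real) \<Rightarrow> nat \<Rightarrow> real set" where
  "iet_Jd a i = {iet_b a (i - 1)<..iet_b a i}"

definition iet_D :: "nat \<Rightarrow> (nat \<Rightarrow> real) \<Rightarrow> real set" where
  "iet_D n a = iet_b a ` {1..n-1}"

definition iet_Dtau :: "nat \<Rightarrow> (nat \<Rightarrow> real) \<Rightarrow> (nat \<Rightarrow> nat) \<Rightarrow> real set" where
  "iet_Dtau n a \<tau> = iet_btau a \<tau> ` {1..n-1}"

text \<open>The Lr IET T on [0,1) (values outside [0,1) are irrelevant).\<close>
definition iet_T :: "nat \<Rightarrow> (nat \<Rightarrow> real) \<Rightarrow> (nat \<Rightarrow> nat) \<Rightarrow> real \<Rightarrow> real" where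
  "iet_T n a \<tau> x = (let i = (THE i. i \<in> {1..n} \<and> x \<in> iet_J a i)
      in x - iet_b a (i - 1) + iet_btau a \<tau> (\<tau> i - 1))"

definition iet_Td :: "nat \<Rightarrow> (nat \<Rightarrow> real) \<Rightarrow> (nat \<Rightarrow> nat) \<Rightarrow> real \<Rightarrow> real" where
  "iet_Td n a \<tau> x = (let i = (THE i. i \<in> {1..n} \<and> x \<in> iet_Jd a i)
      in x - iet_b a (i - 1) + iet_btau a \<tau> (\<tau> i - 1))"

definition iet_Tpow :: "nat \<Rightarrow> (nat \<Rightarrow> real) \<Rightarrow> (nat \<Rightarrow> nat) \<Rightarrow> int \<Rightarrow> real \<Rightarrow> real" where
  "iet_Tpow n a \<tau> k = (if 0 \<le> k then iet_T n a \<tau> ^^ nat k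
      else inv_into {0..<1} (iet_T n a \<tau>) ^^ nat (- k))"

definition iet_Tdpow :: "nat \<Rightarrow> (nat \<Rightarrow> real) \<Rightarrow> (nat \<Rightarrow> nat) \<Rightarrow> int \<Rightarrow> real \<Rightarrow> real" where
  "iet_Tdpow n a \<tau> k = (if 0 \<le> k then iet_Td n a \<tau> ^^ nat k
      else inv_into {0<..1} (iet_Td n a \<tau>) ^^ nat (- k))"

text \<open>Itineraries, elements of Omega = [n]^Z represented as int => nat.\<close>
definition itin :: "nat \<Rightarrow> (nat \<Rightarrow> real) \<Rightarrow> (nat \<Rightarrow> nat) \<Rightarrow> real \<Rightarrow> int \<Rightarrow> nat" where
  "itin n a \<tau> x = (\<lambda>k. THE i. i \<in> {1..n} \<and> iet_Tpow n a \<tau> k x \<in> iet_J a i)"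

definition itin_d :: "nat \<Rightarrow> (nat \<Rightarrow> real) \<Rightarrow> (nat \<Rightarrow> nat) \<Rightarrow> real \<Rightarrow> int \<Rightarrow> nat" where
  "itin_d n a \<tau> x = (\<lambda>k. THE i. i \<in> {1..n} \<and> iet_Tdpow n a \<tau> k x \<in> iet_Jd a i)"

definition irreducible_perm :: "nat \<Rightarrow> (nat \<Rightarrow> nat) \<Rightarrow> bool" where
  "irreducible_perm n \<tau> = (\<forall>j\<in>{1..n-1}. \<tau> ` {1..j} \<noteq> {1..j})"

definition split_perm :: "nat \<Rightarrow> (nat \<Rightarrow> nat) \<Rightarrow> bool" where
  "split_perm n \<tau> = (\<forall>j\<in>{1..n-1}. \<tau> (j + 1) \<noteq> \<tau> j + 1)"

definition fully_split_perm :: "nat \<Rightarrow> (nat \<Rightarrow> nat) \<Rightarrow> bool" where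
  "fully_split_perm n \<tau> = (split_perm n \<tau> \<and> \<tau> 1 \<noteq> \<tau> n + 1
      \<and> inv \<tau> 1 \<noteq> inv \<tau> n + 1)"

definition keane :: "nat \<Rightarrow> (nat \<Rightarrow> real) \<Rightarrow> (nat \<Rightarrow> nat) \<Rightarrow> bool" where
  "keane n a \<tau> = (\<forall>k::nat. k \<ge> 1 \<longrightarrow>
      iet_D n a \<inter> (iet_T n a \<tau> ^^ k) ` iet_D n a = {})"

definition iet_Dinf :: "nat \<Rightarrow> (nat \<Rightarrow> real) \<Rightarrow> (nat \<Rightarrow> nat) \<Rightarrow> real set" where
  "iet_Dinf n a \<tau> = {0, 1} \<union> (\<Union>k::int. iet_Tpow n a \<tau> k ` iet_D n a)"

definition iet_R :: "nat \<Rightarrow> (nat \<Rightarrow> real) \<Rightarrow> (nat \<Rightarrow> nat) \<Rightarrow> real set" where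
  "iet_R n a \<tau> = {0..1} - iet_Dinf n a \<tau>"

text \<open>X = closure of I(R) in Omega with the product topology (nat carries the
  discrete topology; Omega is closed in int => nat, so the closures agree).\<close>
definition iet_X :: "nat \<Rightarrow> (nat \<Rightarrow> real) \<Rightarrow> (nat \<Rightarrow> nat) \<Rightarrow> (int \<Rightarrow> nat) set" where
  "iet_X n a \<tau> = closure (itin n a \<tau> ` iet_R n a \<tau>)"

definition shiftk :: "int \<Rightarrow> (int \<Rightarrow> nat) \<Rightarrow> int \<Rightarrow> nat" where
  "shiftk k \<alpha> = (\<lambda>i. \<alpha> (i + k))"

definition pos_asymp :: "(int \<Rightarrow> nat) \<Rightarrow> (int \<Rightarrow> nat) \<Rightarrow> bool" where
  "pos_asymp \<alpha> \<beta> = (\<exists>N. \<forall>i\<ge>N. \<alpha> i = \<beta> i)"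

definition neg_asymp :: "(int \<Rightarrow> nat) \<Rightarrow> (int \<Rightarrow> nat) \<Rightarrow> bool" where
  "neg_asymp \<alpha> \<beta> = (\<exists>N. \<forall>i\<le>-N. \<alpha> i = \<beta> i)"

definition doubly_asymp :: "(int \<Rightarrow> nat) \<Rightarrow> (int \<Rightarrow> nat) \<Rightarrow> bool" where
  "doubly_asymp \<alpha> \<beta> = (pos_asymp \<alpha> \<beta> \<and> neg_asymp \<alpha> \<beta>)"

end

theory Submission
  imports Defs
begin


lemma fpow_in: "(\<And>z. z \<in> S \<Longrightarrow> f z \<in> S) \<Longrightarrow> x \<in> S \<Longrightarrow> (f^^j) x \<in> S"
  by (induction j) auto

lemma transl_same:
  fixes f :: "real \<Rightarrow> real"
  assumes fS: "\<And>z. z\<in>S \<Longrightarrow> f z \<in> S" and fs: "\<And>z. z \<in> S \<Longrightarrow> f z = z + s (\<iota> z)"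
    and z: "z \<in> S" and w: "w \<in> S" and same: "\<And>j. \<iota> ((f^^j) z) = \<iota> ((f^^j) w)"
  shows "(f^^j) w - w = (f^^j) z - z"
proof (induction j)
  case (Suc j)
  have "(f^^Suc j) w = (f^^j) w + s (\<iota> ((f^^j) w))" using fs fpow_in[OF fS w] by simp
  moreover have "(f^^Suc j) z = (f^^j) z + s (\<iota> ((f^^j) z))" using fs fpow_in[OF fS z] by simp
  ultimately show ?case using Suc same[of j] by simp
qed simp

lemma inj_generic:
  fixes f :: "real \<Rightarrow> real" and \<iota> :: "real \<Rightarrow> nat" and s :: "nat \<Rightarrow> real"
  assumes S01: "S \<subseteq> {0..1}" and fS: "\<And>z. z\<in>S \<Longrightarrow> f z \<in> S"
    and fs: "\<And>z. z \<in> S \<Longrightarrow> f z = z + s (\<iota> z)"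
    and conv: "\<And>u v w. u\<in>S \<Longrightarrow> w\<in>S \<Longrightarrow> u \<le> v \<Longrightarrow> v \<le> w \<Longrightarrow> \<iota> u = \<iota> w \<Longrightarrow> v \<in> S \<and> \<iota> v = \<iota> w"
    and noper: "\<And>z p. z \<in> S \<Longrightarrow> 0 < p \<Longrightarrow> (f^^p) z \<noteq> z"
    and x: "x\<in>S" and y: "y \<in> S" and same: "\<And>j. \<iota> ((f^^j) x) = \<iota> ((f^^j) y)"
  shows "x = y"
proof -
  have fin: "\<And>x j. x \<in> S \<Longrightarrow> (f^^j) x \<in> S" using fpow_in[of S f] fS by blast
  have L1: "(f^^j) w - w = (f^^j) z - z" if "z \<in> S" "w \<in> S" "\<And>j. \<iota> ((f^^j) z) = \<iota> ((f^^j) w)" for z w j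
    using transl_same[OF fS fs that] by blast
  have L2: "(f^^j) z \<in> S \<and> (f^^j) z = z + ((f^^j) u - u) \<and> \<iota> ((f^^j) z) = \<iota> ((f^^j) u)"
    if u: "u \<in> S" and w: "w \<in> S" and uz: "u \<le> z" and zw: "z \<le> w"
      and sm: "\<And>j. \<iota> ((f^^j) u) = \<iota> ((f^^j) w)" for u w z j
  proof (induction j)
    case 0
    then show ?case using conv[OF u w uz zw sm[of 0, simplified]] sm[of 0] by simp
  next
    case (Suc j)
    have zin: "(f^^j) z \<in> S" using Suc by blast
    have "(f^^Suc j) z = f ((f^^j) z)" by simp
    also have "\<dots> = (f^^j) z + s (\<iota> ((f^^j) z))" by (rule fs[OF zin])
    also have "\<dots> = z + ((f^^j) u - u) + s (\<iota> ((f^^j) u))" using Suc by metis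
    also have "\<dots> = z + ((f^^Suc j) u - u)" using fs[OF fin[OF u]] by simp
    finally have e1: "(f^^Suc j) z = z + ((f^^Suc j) u - u)" .
    have e2: "(f^^Suc j) w - w = (f^^Suc j) u - u" using L1[OF u w sm] .
    have "(f^^Suc j) z \<in> S \<and> \<iota> ((f^^Suc j) z) = \<iota> ((f^^Suc j) w)"
      by (rule conv[OF fin[of u "Suc j", OF u] fin[of w "Suc j", OF w]]) (use e1 e2 uz zw sm[of "Suc j"] in auto)
    then show ?case using e1 sm[of "Suc j"] by simp
  qed
  have L3: "(f^^p) w = w" if w: "w \<in> S" and p: "0 < p" and per: "\<And>j. \<iota> ((f^^(j+p)) w) = \<iota> ((f^^j) w)" for w p
  proof -
    define c where "c = (f^^p) w - w"
    have M: "w + real m * c \<in> S \<and> (\<forall>j. \<iota> ((f^^j) (w + real m * c)) = \<iota> ((f^^j) w))" for m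
    proof (induction m)
      case 0 then show ?case using w by simp
    next
      case (Suc m)
      define z where "z = w + real m * c"
      have zS: "z \<in> S" and zi: "\<And>j. \<iota> ((f^^j) z) = \<iota> ((f^^j) w)" using Suc by (auto simp: z_def)
      have "(f^^p) z - z = c" using L1[OF w zS] zi c_def by metis
      then have eq: "w + real (Suc m) * c = (f^^p) z" by (simp add: z_def algebra_simps)
      have "\<iota> ((f^^j) ((f^^p) z)) = \<iota> ((f^^j) w)" for j
      proof -
        have "(f^^j) ((f^^p) z) = (f^^(j+p)) z" by (simp add: funpow_add)
        then have "\<iota> ((f^^j) ((f^^p) z)) = \<iota> ((f^^(j+p)) w)" using zi by simp
        then show ?thesis using per by simp
      qed
      then show ?case using eq fin[OF zS] by simp
    qed
    have "c = 0"
    proof (rule ccontr)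
      assume "c \<noteq> 0"
      then have "\<bar>c\<bar> > 0" by simp
      then obtain m :: nat where m: "1 < real m * \<bar>c\<bar>" using ex_less_of_nat_mult by blast
      have "w + real m * c \<in> {0..1}" "w \<in> {0..1}" using M[of m] S01 w by auto
      moreover have "real m * c = real m * \<bar>c\<bar> \<or> real m * c = - (real m * \<bar>c\<bar>)" by (auto simp: abs_if)
      ultimately show False using m by auto
    qed
    then show ?thesis by (simp add: c_def)
  qed
  \<comment> \<open>pigeonhole\<close>
  have L4: "\<exists>k k'. k < k' \<and> (\<forall>j. \<iota> ((f^^(j+k)) u) = \<iota> ((f^^(j+k')) u))"
    if u: "u \<in> S" and w: "w \<in> S" and uw: "u < w" and sm: "\<And>j. \<iota> ((f^^j) u) = \<iota> ((f^^j) w)" for u w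
  proof -
    define L where "L = w - u"
    have L0: "L > 0" using uw by (simp add: L_def)
    define M :: nat where "M = nat \<lceil>1/L\<rceil> + 1"
    have M1: "real M > 1/L" unfolding M_def by linarith
    have Mpos: "real M > 0" unfolding M_def by simp
    have hML: "1 / real M < L" using M1 L0 Mpos by (simp add: field_simps)
    define P where "P k = (f^^k) u" for k
    have P01: "P k \<in> {0..1}" for k using subsetD[OF S01 fin[of u k, OF u]] by (simp add: P_def)
    define h where "h k = nat \<lfloor>P k * real M\<rfloor>" for k
    have hM: "h ` {0..M+1} \<subseteq> {0..M}"
    proof
      fix t assume "t \<in> h ` {0..M+1}"
      then obtain k where t: "t = h k" by auto
      have "P k * real M \<le> real M" using P01[of k] Mpos by (simp add: mult_le_cancel_right1)
      then have "\<lfloor>P k * real M\<rfloor> \<le> int M" by (metis floor_le_iff of_int_of_nat_eq floor_mono floor_of_nat)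
      then show "t \<in> {0..M}" by (simp add: t h_def)
    qed
    have "\<not> inj_on h {0..M+1}"
    proof
      assume "inj_on h {0..M+1}"
      then have "card {0..M+1} \<le> card {0..M}" using card_inj_on_le[OF _ hM] by simp
      then show False by simp
    qed
    then obtain k1 k2 where k12: "k1 \<noteq> k2" "h k1 = h k2" unfolding inj_on_def by blast
    have close: "\<bar>P k1 - P k2\<bar> < L"
    proof -
      have f0: "\<lfloor>P k * real M\<rfloor> \<ge> 0" for k using P01[of k] Mpos by simp
      have "\<lfloor>P k1 * real M\<rfloor> = \<lfloor>P k2 * real M\<rfloor>" using k12(2) f0[of k1] f0[of k2] unfolding h_def by linarith
      then have "\<bar>P k1 * real M - P k2 * real M\<bar> < 1" by linarith
      then have "\<bar>P k1 - P k2\<bar> * real M < 1" by (simp add: left_diff_distrib[symmetric] abs_mult Mpos)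
      then have "\<bar>P k1 - P k2\<bar> < 1 / real M" using Mpos by (simp add: field_simps)
      then show ?thesis using hML by linarith
    qed
    have key: "\<forall>j. \<iota> ((f^^(j+K)) u) = \<iota> ((f^^(j+K')) u)"
      if le: "P K \<le> P K'" and cl: "P K' < P K + L" for K K'
    proof
      fix j
      define z where "z = P K' - (P K - u)"
      have z1: "u \<le> z" "z \<le> w" using le cl by (auto simp: z_def L_def)
      have L2z: "\<And>j. (f^^j) z \<in> S \<and> (f^^j) z = z + ((f^^j) u - u) \<and> \<iota> ((f^^j) z) = \<iota> ((f^^j) u)"
        using L2[OF u w z1 sm] by blast
      have Lz: "(f^^K) z = P K'" "\<forall>j. \<iota> ((f^^j) z) = \<iota> ((f^^j) u)"
        subgoal using L2z[of K] by (simp add: z_def P_def)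
        subgoal using L2z by blast
        done
      have "\<iota> ((f^^(j+K)) u) = \<iota> ((f^^(j+K)) z)" using Lz(2) by simp
      also have "\<dots> = \<iota> ((f^^j) ((f^^K) z))" by (simp add: funpow_add)
      also have "\<dots> = \<iota> ((f^^(j+K')) u)" using Lz(1) by (simp add: funpow_add P_def)
      finally show "\<iota> ((f^^(j+K)) u) = \<iota> ((f^^(j+K')) u)" .
    qed
    have "\<forall>j. \<iota> ((f^^(j+k1)) u) = \<iota> ((f^^(j+k2)) u)"
    proof (cases "P k1 \<le> P k2")
      case True then show ?thesis using key[of k1 k2] close by auto
    next
      case False then show ?thesis using key[of k2 k1] close by auto
    qed
    then show ?thesis using k12(1)
    proof (cases "k1 < k2")
      case True then show ?thesis using \<open>\<forall>j. _\<close> by blast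
    next
      case False then have "k2 < k1" using k12(1) by simp
      then show ?thesis using \<open>\<forall>j. _\<close> by metis
    qed
  qed
  have main: "False" if u: "u \<in> S" and w: "w \<in> S" and uw: "u < w" and sm: "\<And>j. \<iota> ((f^^j) u) = \<iota> ((f^^j) w)" for u w
  proof -
    obtain k k' where kk: "k < k'" "\<And>j. \<iota> ((f^^(j+k)) u) = \<iota> ((f^^(j+k')) u)" using L4[OF u w uw sm] by blast
    define q where "q = (f^^k) u"
    have "\<iota> ((f^^(j+(k'-k))) q) = \<iota> ((f^^j) q)" for j
    proof -
      have "(f^^(j+(k'-k))) q = (f^^(j+(k'-k)+k)) u" by (simp only: q_def funpow_add o_apply)
      moreover have "j + (k'-k) + k = j + k'" using kk(1) by simp
      ultimately have "(f^^(j+(k'-k))) q = (f^^(j+k')) u" by simp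
      moreover have "(f^^j) q = (f^^(j+k)) u" by (simp add: q_def funpow_add)
      ultimately show ?thesis using kk(2) by simp
    qed
    then have "(f^^(k'-k)) q = q" using L3[OF fin[OF u] ] kk(1) by (simp add: q_def)
    then show False using noper[OF fin[OF u], of "k'-k"] kk(1) by (simp add: q_def)
  qed
  show ?thesis
  proof (rule ccontr)
    assume "x \<noteq> y"
    then show False using main[OF x y] main[OF y x] same by (metis linorder_neqE)
  qed
qed


lemma cyl_generic:
  fixes f :: "real \<Rightarrow> real" and \<iota> :: "real \<Rightarrow> nat" and s l r :: "nat \<Rightarrow> real"
  assumes S01: "S \<subseteq> {0..1}" and fS: "\<And>z. z\<in>S \<Longrightarrow> f z \<in> S"
    and fs: "\<And>z. z \<in> S \<Longrightarrow> f z = z + s (\<iota> z)"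
    and p1: "\<And>z. z\<in>S \<Longrightarrow> l (\<iota> z) \<le> z \<and> z < r (\<iota> z)"
    and p2: "\<And>z i. i \<in> \<iota> ` S \<Longrightarrow> l i \<le> z \<Longrightarrow> z < r i \<Longrightarrow> z \<in> S \<and> \<iota> z = i"
    and z: "z \<in> S" and p: "0 < p" and per: "(f^^p) z = z"
  shows "\<exists>u\<in>S. (f^^p) u = u \<and> (\<exists>j<p. (f^^j) u = l (\<iota> ((f^^j) u)))"
proof -
  have fin: "\<And>x j. x \<in> S \<Longrightarrow> (f^^j) x \<in> S" using fpow_in[of S f] fS by blast
  define c where "c j = (f^^j) z - z" for j
  define ii where "ii j = \<iota> ((f^^j) z)" for j
  define C where "C = {w \<in> S. \<forall>j<p. \<iota> ((f^^j) w) = ii j}"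
  have A: "(f^^j) w = w + c j" if w: "w \<in> C" and jp: "j \<le> p" for w j
    using jp
  proof (induction j)
    case 0 then show ?case by (simp add: c_def)
  next
    case (Suc j)
    have wS: "w \<in> S" using w C_def by auto
    have "(f^^Suc j) w = (f^^j) w + s (\<iota> ((f^^j) w))" using fs[OF fin[OF wS]] by simp
    also have "\<dots> = w + c j + s (ii j)"
    proof -
      have IHe: "(f^^j) w = w + c j" using Suc by simp
      have ie: "\<iota> ((f^^j) w) = ii j" using w Suc.prems by (auto simp: C_def)
      show ?thesis by (subst ie) (simp add: IHe)
    qed
    also have "\<dots> = w + c (Suc j)" using fs[OF fin[OF z]] by (simp add: c_def ii_def)
    finally show ?case .
  qed
  have B: "w \<in> C" if hw: "\<And>j. j < p \<Longrightarrow> l (ii j) \<le> w + c j \<and> w + c j < r (ii j)" for w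
  proof -
    have "j < p \<longrightarrow> (f^^j) w = w + c j \<and> (f^^j) w \<in> S \<and> \<iota> ((f^^j) w) = ii j" for j
    proof (induction j)
      case 0
      have "ii 0 \<in> \<iota> ` S" using z by (simp add: ii_def)
      then show ?case using p2[of "ii 0" w] hw[of 0] by (simp add: c_def)
    next
      case (Suc j)
      show ?case
      proof
        assume j: "Suc j < p"
        then have IH: "(f^^j) w = w + c j" "(f^^j) w \<in> S" "\<iota> ((f^^j) w) = ii j" using Suc by auto
        have "(f^^Suc j) w = (f^^j) w + s (\<iota> ((f^^j) w))" using fs[OF IH(2)] by simp
        also have "\<dots> = w + c (Suc j)" using IH fs[OF fin[OF z, of j]] by (simp add: c_def ii_def)
        finally have e: "(f^^Suc j) w = w + c (Suc j)" .
        have "ii (Suc j) \<in> \<iota> ` S" unfolding ii_def using fin[OF z, of "Suc j"] by (rule imageI)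
        then show "(f^^Suc j) w = w + c (Suc j) \<and> (f^^Suc j) w \<in> S \<and> \<iota> ((f^^Suc j) w) = ii (Suc j)"
          using p2[of "ii (Suc j)" "(f^^Suc j) w"] hw[OF j] e by simp
      qed
    qed
    then have h: "\<And>j. j < p \<Longrightarrow> (f^^j) w \<in> S \<and> \<iota> ((f^^j) w) = ii j" by blast
    have "w \<in> S" using h[OF p] by simp
    then show ?thesis unfolding C_def using h by blast
  qed
  have zC: "z \<in> C" using z by (simp add: C_def ii_def)
  have C01: "C \<subseteq> {0..1}" using S01 C_def by auto
  then have bdd: "bdd_below C" by (meson atLeastAtMost_iff bdd_below.I subsetD)
  define u where "u = Inf C"
  have uz: "u \<le> z" using cInf_lower[OF zC bdd] by (simp add: u_def)
  have lo: "l (ii j) \<le> u + c j" if "j < p" for j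
  proof -
    have "l (ii j) - c j \<le> w" if w: "w \<in> C" for w
    proof -
      have wS: "w \<in> S" and wi: "\<iota> ((f^^j) w) = ii j" using w \<open>j<p\<close> unfolding C_def by auto
      have "(f^^j) w \<in> S" using fin[OF wS] .
      note this wi
      then show ?thesis using p1[of "(f^^j) w"] A[OF w, of j] \<open>j<p\<close> by simp
    qed
    then have "l (ii j) - c j \<le> u" unfolding u_def using zC by (intro cInf_greatest) auto
    then show ?thesis by simp
  qed
  have hi: "u + c j < r (ii j)" if "j < p" for j
  proof -
    have "z + c j < r (ii j)" using p1[OF fin[OF z, of j]] by (simp add: c_def ii_def)
    then show ?thesis using uz by simp
  qed
  have uC: "u \<in> C" using B lo hi by blast
  have uS: "u \<in> S" using uC C_def by auto
  have cp: "c p = 0" using per by (simp add: c_def)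
  have uper: "(f^^p) u = u" using A[OF uC, of p] cp by simp
  have "\<exists>j<p. (f^^j) u = l (\<iota> ((f^^j) u))"
  proof (rule ccontr)
    assume "\<not> ?thesis"
    then have ne: "(f^^j) u \<noteq> l (\<iota> ((f^^j) u))" if "j < p" for j using that by blast
    have gt: "l (ii j) < u + c j" if "j < p" for j
    proof -
      have "\<iota> ((f^^j) u) = ii j" using uC that unfolding C_def by auto
      then have "u + c j \<noteq> l (ii j)" using ne[OF that] A[OF uC, of j] that by simp
      then show ?thesis using lo[OF that] by simp
    qed
    define \<delta> where "\<delta> = Min ((\<lambda>j. u + c j - l (ii j)) ` {..<p})"
    have \<delta>0: "\<delta> > 0" unfolding \<delta>_def using p gt by (subst Min_gr_iff) auto
    have \<delta>le: "\<delta> \<le> u + c j - l (ii j)" if "j < p" for j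
      unfolding \<delta>_def using that by (intro Min_le) auto
    have "u - \<delta>/2 \<in> C"
    proof (rule B)
      fix j assume j: "j < p"
      show "l (ii j) \<le> u - \<delta> / 2 + c j \<and> u - \<delta> / 2 + c j < r (ii j)"
        using \<delta>le[OF j] hi[OF j] \<delta>0 by linarith
    qed
    then have "u \<le> u - \<delta>/2" unfolding u_def using bdd by (rule cInf_lower)
    then show False using \<delta>0 by simp
  qed
  then show ?thesis using uS uper by blast
qed



lemma approx_generic:
  fixes f g :: "real \<Rightarrow> real" and \<iota>f \<iota>g :: "real \<Rightarrow> nat" and s :: "nat \<Rightarrow> real"
    and E :: "real \<Rightarrow> real set"
  assumes gS: "\<And>z. z\<in>Sg \<Longrightarrow> g z \<in> Sg" and gs: "\<And>z. z\<in>Sg \<Longrightarrow> g z = z + s (\<iota>g z)"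
    and fs: "\<And>z. z\<in>Sf \<Longrightarrow> f z = z + s (\<iota>f z)"
    and H: "\<And>v. v \<in> Sg \<Longrightarrow> \<exists>\<delta>>0. \<forall>e\<in>E \<delta>. v + e \<in> Sf \<and> \<iota>f (v + e) = \<iota>g v"
    and Emono: "\<And>\<delta> \<delta>' e. \<delta> \<le> \<delta>' \<Longrightarrow> e \<in> E \<delta> \<Longrightarrow> e \<in> E \<delta>'"
    and v: "v \<in> Sg"
  shows "\<exists>\<delta>>0. \<forall>e\<in>E \<delta>. \<forall>j\<le>p. (f^^j) (v+e) = (g^^j) v + e \<and> (f^^j) (v+e) \<in> Sf \<and> \<iota>f ((f^^j) (v+e)) = \<iota>g ((g^^j) v)"
proof (induction p)
  case 0
  then show ?case using H[OF v] by auto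
next
  case (Suc p)
  obtain \<delta>1 where d1: "\<delta>1 > 0" "\<forall>e\<in>E \<delta>1. \<forall>j\<le>p. (f^^j) (v+e) = (g^^j) v + e \<and> (f^^j) (v+e) \<in> Sf \<and> \<iota>f ((f^^j) (v+e)) = \<iota>g ((g^^j) v)"
    using Suc by blast
  have gin: "(g^^j) v \<in> Sg" for j using fpow_in[of Sg g] gS v by blast
  obtain \<delta>2 where d2: "\<delta>2 > 0" "\<forall>e\<in>E \<delta>2. (g^^Suc p) v + e \<in> Sf \<and> \<iota>f ((g^^Suc p) v + e) = \<iota>g ((g^^Suc p) v)"
    using H[OF gin[of "Suc p"]] by blast
  have m0: "0 < min \<delta>1 \<delta>2" using d1 d2 by simp
  have "\<forall>e\<in>E (min \<delta>1 \<delta>2). \<forall>j\<le>Suc p. (f^^j) (v+e) = (g^^j) v + e \<and> (f^^j) (v+e) \<in> Sf \<and> \<iota>f ((f^^j) (v+e)) = \<iota>g ((g^^j) v)"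
  proof (intro ballI allI impI)
    fix e j assume e: "e \<in> E (min \<delta>1 \<delta>2)" and j: "j \<le> Suc p"
    have e1: "e \<in> E \<delta>1" and e2: "e \<in> E \<delta>2" using Emono[OF _ e] by auto
    show "(f^^j) (v+e) = (g^^j) v + e \<and> (f^^j) (v+e) \<in> Sf \<and> \<iota>f ((f^^j) (v+e)) = \<iota>g ((g^^j) v)"
    proof (cases "j \<le> p")
      case True then show ?thesis using d1(2) e1 by blast
    next
      case False
      have jj: "j = Suc p" using j False by simp
      have IH0: "(f^^p) (v+e) = (g^^p) v + e \<and> (f^^p) (v+e) \<in> Sf \<and> \<iota>f ((f^^p) (v+e)) = \<iota>g ((g^^p) v)"
        using bspec[OF d1(2) e1, rule_format, OF order_refl] .
      note IH = conjunct1[OF IH0] conjunct1[OF conjunct2[OF IH0]] conjunct2[OF conjunct2[OF IH0]]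
      have "(f^^Suc p) (v+e) = (f^^p) (v+e) + s (\<iota>f ((f^^p) (v+e)))" using fs[OF IH(2)] by simp
      also have "\<dots> = (g^^Suc p) v + e"
      proof -
        have "(g^^Suc p) v = (g^^p) v + s (\<iota>g ((g^^p) v))" using gs[OF gin[of p]] by simp
        then show ?thesis unfolding IH(3) by (simp add: IH(1))
      qed
      finally have eq: "(f^^Suc p) (v+e) = (g^^Suc p) v + e" .
      have "(g^^Suc p) v + e \<in> Sf \<and> \<iota>f ((g^^Suc p) v + e) = \<iota>g ((g^^Suc p) v)" using d2(2) e2 by blast
      then show ?thesis unfolding jj eq by simp
    qed
  qed
  then show ?case using m0 by blast
qed



lemma mixed_generic:
  fixes f g :: "real \<Rightarrow> real" and \<iota>f \<iota>g :: "real \<Rightarrow> nat" and s l r :: "nat \<Rightarrow> real"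
  assumes fS: "\<And>z. z\<in>Sf \<Longrightarrow> f z \<in> Sf" and fs: "\<And>z. z\<in>Sf \<Longrightarrow> f z = z + s (\<iota>f z)"
    and gS: "\<And>z. z\<in>Sg \<Longrightarrow> g z \<in> Sg" and gs: "\<And>z. z\<in>Sg \<Longrightarrow> g z = z + s (\<iota>g z)"
    and pf1: "\<And>z. z\<in>Sf \<Longrightarrow> l (\<iota>f z) \<le> z \<and> z < r (\<iota>f z)"
    and pf2: "\<And>z i. i \<in> \<iota>f ` Sf \<Longrightarrow> l i \<le> z \<Longrightarrow> z < r i \<Longrightarrow> z \<in> Sf \<and> \<iota>f z = i"
    and pg1: "\<And>z. z\<in>Sg \<Longrightarrow> l (\<iota>g z) < z \<and> z \<le> r (\<iota>g z)"
    and injf: "\<And>x y. x\<in>Sf \<Longrightarrow> y\<in>Sf \<Longrightarrow> (\<And>j. \<iota>f ((f^^j) x) = \<iota>f ((f^^j) y)) \<Longrightarrow> x = y"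
    and x: "x \<in> Sf" and y: "y \<in> Sg" and same: "\<And>j. \<iota>f ((f^^j) x) = \<iota>g ((g^^j) y)"
  shows "x = y"
proof -
  have finf: "\<And>x j. x \<in> Sf \<Longrightarrow> (f^^j) x \<in> Sf" using fpow_in[of Sf f] fS by blast
  have fing: "\<And>x j. x \<in> Sg \<Longrightarrow> (g^^j) x \<in> Sg" using fpow_in[of Sg g] gS by blast
  define c where "c j = (f^^j) x - x" for j
  have gc: "(g^^j) y = y + c j" for j
  proof (induction j)
    case 0 then show ?case by (simp add: c_def)
  next
    case (Suc j)
    have "(g^^Suc j) y = (g^^j) y + s (\<iota>g ((g^^j) y))" using gs[OF fing[OF y]] by simp
    also have "\<dots> = y + c j + s (\<iota>f ((f^^j) x))" using Suc same[of j] by simp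
    also have "\<dots> = y + c (Suc j)" using fs[OF finf[OF x]] by (simp add: c_def)
    finally show ?case .
  qed
  have ii: "\<iota>f ((f^^j) x) \<in> \<iota>f ` Sf" for j using finf[OF x] by blast
  have inner: "(f^^j) z = z + c j \<and> (f^^j) z \<in> Sf \<and> \<iota>f ((f^^j) z) = \<iota>f ((f^^j) x)"
    if hz: "\<And>j. l (\<iota>f ((f^^j) x)) \<le> z + c j \<and> z + c j < r (\<iota>f ((f^^j) x))" for z j
  proof (induction j)
    case 0 then show ?case using pf2[OF ii[of 0]] hz[of 0] by (simp add: c_def)
  next
    case (Suc j)
    have zin: "(f^^j) z \<in> Sf" using Suc by blast
    have "(f^^Suc j) z = f ((f^^j) z)" by simp
    also have "\<dots> = (f^^j) z + s (\<iota>f ((f^^j) z))" by (rule fs[OF zin])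
    also have "\<dots> = z + c (Suc j)"
    proof -
      have e1: "(f^^j) z = z + c j" and e2: "\<iota>f ((f^^j) z) = \<iota>f ((f^^j) x)" using Suc by auto
      show ?thesis unfolding e2 using fs[OF finf[OF x, of j]] by (simp add: e1 c_def)
    qed
    finally have e: "(f^^Suc j) z = z + c (Suc j)" .
    then show ?case using pf2[OF ii[of "Suc j"]] hz[of "Suc j"] by simp
  qed
  have bnd: "l (\<iota>f ((f^^j) x)) \<le> x + c j" "x + c j < r (\<iota>f ((f^^j) x))"
            "l (\<iota>f ((f^^j) x)) < y + c j" "y + c j \<le> r (\<iota>f ((f^^j) x))" for j
    using pf1[OF finf[OF x, of j]] pg1[OF fing[OF y, of j]] gc[of j] same[of j] by (auto simp: c_def)
  show ?thesis
  proof (rule ccontr)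
    assume ne: "x \<noteq> y"
    define m where "m = (x + y) / 2"
    have hx: "\<And>j. l (\<iota>f ((f^^j) x)) \<le> x + c j \<and> x + c j < r (\<iota>f ((f^^j) x))" using bnd by auto
    have hm: "\<And>j. l (\<iota>f ((f^^j) x)) \<le> m + c j \<and> m + c j < r (\<iota>f ((f^^j) x))"
    proof -
      fix j
      show "l (\<iota>f ((f^^j) x)) \<le> m + c j \<and> m + c j < r (\<iota>f ((f^^j) x))"
        using bnd[of j] ne unfolding m_def by (cases "x < y") (auto simp: field_simps)
    qed
    have "x = m"
    proof (rule injf[OF x])
      show "m \<in> Sf" using inner[OF hm, of 0] by simp
      fix j show "\<iota>f ((f^^j) x) = \<iota>f ((f^^j) m)" using conjunct2[OF conjunct2[OF inner[OF hm, of j]]] by (rule sym)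
    qed
    then show False using ne by (simp add: m_def field_simps)
  qed
qed




definition gp :: "('a \<Rightarrow> 'a) \<Rightarrow> 'a set \<Rightarrow> int \<Rightarrow> 'a \<Rightarrow> 'a" where
  "gp g A k = (if 0 \<le> k then g ^^ nat k else inv_into A g ^^ nat (- k))"

lemma gp_in: assumes "bij_betw g A A" "x \<in> A" shows "gp g A k x \<in> A"
proof -
  have g: "\<And>z. z \<in> A \<Longrightarrow> g z \<in> A" using assms(1) bij_betwE by blast
  have gi: "\<And>z. z \<in> A \<Longrightarrow> inv_into A g z \<in> A" using assms(1) bij_betw_inv_into bij_betwE by blast
  show ?thesis unfolding gp_def using fpow_in[of A g, OF g assms(2)] fpow_in[of A "inv_into A g", OF gi assms(2)] by auto
qed

lemma gp_succ: assumes b: "bij_betw g A A" and x: "x \<in> A" shows "gp g A (k+1) x = g (gp g A k x)"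
proof (cases "0 \<le> k")
  case True
  then have "nat (k+1) = Suc (nat k)" by simp
  then show ?thesis using True by (simp add: gp_def)
next
  case False
  define m where "m = nat (- k) - 1"
  have m: "k = - int (Suc m)" using False unfolding m_def by simp
  have gi: "\<And>z. z \<in> A \<Longrightarrow> inv_into A g z \<in> A" using b bij_betw_inv_into bij_betwE by blast
  have y: "(inv_into A g ^^ m) x \<in> A" using fpow_in[of A "inv_into A g", OF gi x] .
  have "g (inv_into A g ((inv_into A g ^^ m) x)) = (inv_into A g ^^ m) x"
    using y b by (simp add: bij_betw_def f_inv_into_f)
  moreover have "nat (- k) = Suc m" "nat (-(k+1)) = m" using m by auto
  moreover have "0 \<le> k + 1 \<longleftrightarrow> m = 0" using m by auto
  ultimately show ?thesis using False by (auto simp: gp_def)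
qed

lemma gp_pred: assumes b: "bij_betw g A A" and x: "x \<in> A" shows "gp g A (k - 1) x = inv_into A g (gp g A k x)"
proof -
  have "gp g A k x = gp g A ((k - 1) + 1) x" by simp
  also have "\<dots> = g (gp g A (k-1) x)" using gp_succ[OF b x] by blast
  finally have "inv_into A g (gp g A k x) = inv_into A g (g (gp g A (k-1) x))" by simp
  also have "\<dots> = gp g A (k-1) x" using gp_in[OF b x] b by (simp add: bij_betw_def inv_into_f_f)
  finally show ?thesis by simp
qed

lemma gp_0[simp]: "gp g A 0 = id" by (simp add: gp_def)

lemma gp_add: assumes b: "bij_betw g A A" and x: "x \<in> A" shows "gp g A (j + k) x = gp g A j (gp g A k x)"
proof (induction j rule: int_induct[where k=0])
  case base then show ?case by simp
next
  case (step1 i)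
  have "gp g A (i + 1 + k) x = gp g A ((i + k) + 1) x" by (rule arg_cong[where f="\<lambda>t. gp g A t x"]) simp
  also have "\<dots> = g (gp g A (i+k) x)" using gp_succ[OF b x] by blast
  also have "\<dots> = g (gp g A i (gp g A k x))" using step1 by simp
  also have "\<dots> = gp g A (i+1) (gp g A k x)" using gp_succ[OF b gp_in[OF b x]] by simp
  finally show ?case .
next
  case (step2 i)
  have "gp g A (i - 1 + k) x = gp g A ((i + k) - 1) x" by (rule arg_cong[where f="\<lambda>t. gp g A t x"]) simp
  also have "\<dots> = inv_into A g (gp g A (i+k) x)" using gp_pred[OF b x] by blast
  also have "\<dots> = inv_into A g (gp g A i (gp g A k x))" using step2 by simp
  also have "\<dots> = gp g A (i-1) (gp g A k x)" using gp_pred[OF b gp_in[OF b x]] by simp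
  finally show ?case .
qed

lemma gp_nat: "gp g A (int m) = g ^^ m" by (simp add: gp_def)
lemma gp_neg: "gp g A (- int m) = inv_into A g ^^ m" by (cases "m = 0") (auto simp: gp_def)

lemma funpow_inv_agree:
  assumes "\<And>z. z \<in> A \<Longrightarrow> h z = h' z" "\<And>z. z \<in> A \<Longrightarrow> h z \<in> A" "x \<in> A"
  shows "(h ^^ m) x = (h' ^^ m) x"
  using assms by (induction m) (auto intro: fpow_in)

lemma funpow_inv_agree2:
  assumes "\<And>z. z \<in> A \<Longrightarrow> h z = h' z" "\<And>z. z \<in> A \<Longrightarrow> h z \<in> A" "x \<in> A"
  shows "(h ^^ m) x = (h' ^^ m) x \<and> (h ^^ m) x \<in> A"
proof (induction m)
  case (Suc m) then show ?case using assms by auto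
qed (use assms in auto)

lemma smono_lt: assumes "\<And>i. i < n \<Longrightarrow> (c::nat\<Rightarrow>real) i < c (Suc i)" and "i < j" "j \<le> n" shows "c i < c j"
  using assms(2,3)
proof (induction j)
  case (Suc j)
  then show ?case using assms(1)[of j] by (cases "i = j") auto
qed simp

lemma smono_le: assumes "\<And>i. i < n \<Longrightarrow> (c::nat\<Rightarrow>real) i < c (Suc i)" and "i \<le> j" "j \<le> n" shows "c i \<le> c j"
  using smono_lt[of n c, OF assms(1)] assms(2,3) by (cases "i = j") (auto simp: less_imp_le)

lemma part_ex_lo:
  assumes m: "\<And>i. i < n \<Longrightarrow> (c::nat\<Rightarrow>real) i < c (Suc i)" and c0: "c 0 = 0" and cn: "c n = 1" and x: "0 \<le> x" "x < 1"
  shows "\<exists>i\<in>{1..n}. c (i-1) \<le> x \<and> x < c i"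
proof -
  define i where "i = (LEAST i. x < c i)"
  have ex: "x < c n" using x cn by simp
  have xi: "x < c i" unfolding i_def using ex by (rule LeastI)
  have "i \<le> n" unfolding i_def using ex by (rule Least_le)
  moreover have "i \<noteq> 0" proof assume "i = 0" then show False using xi c0 x by simp qed
  moreover have "\<not> x < c (i-1)" using not_less_Least[of "i-1" "\<lambda>i. x < c i"] \<open>i \<noteq> 0\<close> unfolding i_def by simp
  ultimately show ?thesis using xi by (intro bexI[of _ i]) auto
qed

lemma part_ex_hi:
  assumes m: "\<And>i. i < n \<Longrightarrow> (c::nat\<Rightarrow>real) i < c (Suc i)" and c0: "c 0 = 0" and cn: "c n = 1" and x: "0 < x" "x \<le> 1"
  shows "\<exists>i\<in>{1..n}. c (i-1) < x \<and> x \<le> c i"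
proof -
  define i where "i = (LEAST i. x \<le> c i)"
  have ex: "x \<le> c n" using x cn by simp
  have xi: "x \<le> c i" unfolding i_def using ex by (rule LeastI)
  have "i \<le> n" unfolding i_def using ex by (rule Least_le)
  moreover have "i \<noteq> 0" proof assume "i = 0" then show False using xi c0 x by simp qed
  moreover have "\<not> x \<le> c (i-1)" using not_less_Least[of "i-1" "\<lambda>i. x \<le> c i"] \<open>i \<noteq> 0\<close> unfolding i_def by simp
  ultimately show ?thesis using xi by (intro bexI[of _ i]) auto
qed

lemma part_uniq_lo:
  assumes m: "\<And>i. i < n \<Longrightarrow> (c::nat\<Rightarrow>real) i < c (Suc i)"
    and i: "i \<in> {1..n}" "c (i-1) \<le> x" "x < c i" and j: "j \<in> {1..n}" "c (j-1) \<le> x" "x < c j"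
  shows "i = j"
proof (rule ccontr)
  assume "i \<noteq> j"
  then consider "i < j" | "j < i" by linarith
  then show False
  proof cases
    case 1 then have "c i \<le> c (j-1)" using smono_le[of n c, OF m, of i "j-1"] j by auto
    then show False using i j by simp
  next
    case 2 then have "c j \<le> c (i-1)" using smono_le[of n c, OF m, of j "i-1"] i by auto
    then show False using i j by simp
  qed
qed

lemma part_uniq_hi:
  assumes m: "\<And>i. i < n \<Longrightarrow> (c::nat\<Rightarrow>real) i < c (Suc i)"
    and i: "i \<in> {1..n}" "c (i-1) < x" "x \<le> c i" and j: "j \<in> {1..n}" "c (j-1) < x" "x \<le> c j"
  shows "i = j"
proof (rule ccontr)
  assume "i \<noteq> j"
  then consider "i < j" | "j < i" by linarith
  then show False
  proof cases
    case 1 then have "c i \<le> c (j-1)" using smono_le[of n c, OF m, of i "j-1"] j by auto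
    then show False using i j by simp
  next
    case 2 then have "c j \<le> c (i-1)" using smono_le[of n c, OF m, of j "i-1"] i by auto
    then show False using i j by simp
  qed
qed


locale iet =
  fixes n :: nat and a :: "nat \<Rightarrow> real" and \<tau> :: "nat \<Rightarrow> nat"
  assumes n2: "n \<ge> 2" and apos: "\<forall>i\<in>{1..n}. a i > 0" and asum: "(\<Sum>i=1..n. a i) = 1"
    and perm: "\<tau> permutes {1..n}" and irr: "irreducible_perm n \<tau>" and kea: "keane n a \<tau>"
begin

abbreviation b where "b \<equiv> iet_b a"
abbreviation bt where "bt \<equiv> iet_btau a \<tau>"
abbreviation T where "T \<equiv> iet_T n a \<tau>"
abbreviation Td where "Td \<equiv> iet_Td n a \<tau>"
abbreviation D where "D \<equiv> iet_D n a"
definition sh where "sh i = bt (\<tau> i - 1) - b (i - 1)"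
definition idx where "idx x = (THE i. i \<in> {1..n} \<and> x \<in> iet_J a i)"
definition idxd where "idxd x = (THE i. i \<in> {1..n} \<and> x \<in> iet_Jd a i)"
definition idxt where "idxt y = (THE m. m \<in> {1..n} \<and> bt (m-1) \<le> y \<and> y < bt m)"
definition idxtd where "idxtd y = (THE m. m \<in> {1..n} \<and> bt (m-1) < y \<and> y \<le> bt m)"
definition ii where "ii y = inv \<tau> (idxt y)"
definition iid where "iid y = inv \<tau> (idxtd y)"
definition Ti where "Ti y = y - sh (ii y)"
definition Tdi where "Tdi y = y - sh (iid y)"

lemma tau_in: "i \<in> {1..n} \<Longrightarrow> \<tau> i \<in> {1..n}" using permutes_in_image[OF perm] by blast
lemma invtau_in: "i \<in> {1..n} \<Longrightarrow> inv \<tau> i \<in> {1..n}" using permutes_in_image[OF permutes_inv[OF perm]] by blast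
lemma tau_inv[simp]: "\<tau> (inv \<tau> i) = i" using permutes_inverses[OF perm] by blast
lemma inv_tau[simp]: "inv \<tau> (\<tau> i) = i" using permutes_inverses[OF perm] by blast

lemma b_Suc: "b (Suc i) = b i + a (Suc i)" by (simp add: iet_b_def)
lemma b0[simp]: "b 0 = 0" by (simp add: iet_b_def)
lemma bn: "b n = 1" using asum by (simp add: iet_b_def)
lemma bmono: "i < n \<Longrightarrow> b i < b (Suc i)" using apos b_Suc by auto
lemma bt_Suc: "bt (Suc i) = bt i + a (inv \<tau> (Suc i))" by (simp add: iet_btau_def)
lemma bt0[simp]: "bt 0 = 0" by (simp add: iet_btau_def)
lemma btn: "bt n = 1"
proof -
  have "(\<Sum>j=1..n. a j) = sum a (inv \<tau> ` {1..n})" using permutes_image[OF permutes_inv[OF perm]] by simp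
  also have "\<dots> = sum (a \<circ> inv \<tau>) {1..n}" by (rule sum.reindex) (meson permutes_inj_on permutes_inv[OF perm])
  finally show ?thesis using asum by (simp add: iet_btau_def)
qed
lemma btmono: "i < n \<Longrightarrow> bt i < bt (Suc i)" using apos bt_Suc invtau_in[of "Suc i"] by auto

lemma b_lt: "i < j \<Longrightarrow> j \<le> n \<Longrightarrow> b i < b j" using smono_lt[of n b, OF bmono] by blast
lemma b_le: "i \<le> j \<Longrightarrow> j \<le> n \<Longrightarrow> b i \<le> b j" using smono_le[of n b, OF bmono] by blast
lemma bt_lt: "i < j \<Longrightarrow> j \<le> n \<Longrightarrow> bt i < bt j" using smono_lt[of n bt, OF btmono] by blast
lemma bt_le: "i \<le> j \<Longrightarrow> j \<le> n \<Longrightarrow> bt i \<le> bt j" using smono_le[of n bt, OF btmono] by blast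
lemma b_inj: "i \<le> n \<Longrightarrow> j \<le> n \<Longrightarrow> b i = b j \<Longrightarrow> i = j"
  using b_lt[of i j] b_lt[of j i] by (cases i j rule: linorder_cases) auto
lemma bt_inj: "i \<le> n \<Longrightarrow> j \<le> n \<Longrightarrow> bt i = bt j \<Longrightarrow> i = j"
  using bt_lt[of i j] bt_lt[of j i] by (cases i j rule: linorder_cases) auto
lemma b_nonneg: "i \<le> n \<Longrightarrow> 0 \<le> b i" using b_le[of 0 i] by simp
lemma b_le1: "i \<le> n \<Longrightarrow> b i \<le> 1" using b_le[of i n] bn by simp
lemma bt_nonneg: "i \<le> n \<Longrightarrow> 0 \<le> bt i" using bt_le[of 0 i] by simp
lemma bt_le1: "i \<le> n \<Longrightarrow> bt i \<le> 1" using bt_le[of i n] btn by simp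

lemma blen: "i \<in> {1..n} \<Longrightarrow> b i - b (i-1) = a i" using b_Suc[of "i-1"] by (cases i) auto
lemma btlen: "i \<in> {1..n} \<Longrightarrow> bt (\<tau> i) - bt (\<tau> i - 1) = a i"
proof -
  assume i: "i \<in> {1..n}"
  have "Suc (\<tau> i - 1) = \<tau> i" using tau_in[OF i] by auto
  then have "bt (\<tau> i) = bt (\<tau> i - 1) + a (inv \<tau> (\<tau> i))" by (metis bt_Suc)
  then show ?thesis by simp
qed

lemma idx_eq: "i \<in> {1..n} \<Longrightarrow> b (i-1) \<le> x \<Longrightarrow> x < b i \<Longrightarrow> idx x = i"
  unfolding idx_def iet_J_def
  by (rule the_equality) (auto intro: part_uniq_lo[of n b, OF bmono])
lemma idx_prop: "0 \<le> x \<Longrightarrow> x < 1 \<Longrightarrow> idx x \<in> {1..n} \<and> b (idx x - 1) \<le> x \<and> x < b (idx x)"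
  using part_ex_lo[of n b x, OF bmono b0 bn] idx_eq by metis
lemma idxd_eq: "i \<in> {1..n} \<Longrightarrow> b (i-1) < x \<Longrightarrow> x \<le> b i \<Longrightarrow> idxd x = i"
  unfolding idxd_def iet_Jd_def
  by (rule the_equality) (auto intro: part_uniq_hi[of n b, OF bmono])
lemma idxd_prop: "0 < x \<Longrightarrow> x \<le> 1 \<Longrightarrow> idxd x \<in> {1..n} \<and> b (idxd x - 1) < x \<and> x \<le> b (idxd x)"
  using part_ex_hi[of n b x, OF bmono b0 bn] idxd_eq by metis
lemma idxt_eq: "i \<in> {1..n} \<Longrightarrow> bt (i-1) \<le> x \<Longrightarrow> x < bt i \<Longrightarrow> idxt x = i"
  unfolding idxt_def
  by (rule the_equality) (auto intro: part_uniq_lo[of n bt, OF btmono])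
lemma idxt_prop: "0 \<le> x \<Longrightarrow> x < 1 \<Longrightarrow> idxt x \<in> {1..n} \<and> bt (idxt x - 1) \<le> x \<and> x < bt (idxt x)"
  using part_ex_lo[of n bt x, OF btmono bt0 btn] idxt_eq by metis
lemma idxtd_eq: "i \<in> {1..n} \<Longrightarrow> bt (i-1) < x \<Longrightarrow> x \<le> bt i \<Longrightarrow> idxtd x = i"
  unfolding idxtd_def
  by (rule the_equality) (auto intro: part_uniq_hi[of n bt, OF btmono])
lemma idxtd_prop: "0 < x \<Longrightarrow> x \<le> 1 \<Longrightarrow> idxtd x \<in> {1..n} \<and> bt (idxtd x - 1) < x \<and> x \<le> bt (idxtd x)"
  using part_ex_hi[of n bt x, OF btmono bt0 btn] idxtd_eq by metis

lemma T_eq: "T x = x + sh (idx x)"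
  by (simp add: iet_T_def idx_def sh_def Let_def)
lemma Td_eq: "Td x = x + sh (idxd x)"
  by (simp add: iet_Td_def idxd_def sh_def Let_def)

lemma T_piece:
  assumes x: "0 \<le> x" "x < 1"
  shows "bt (\<tau> (idx x) - 1) \<le> T x \<and> T x < bt (\<tau> (idx x)) \<and> idxt (T x) = \<tau> (idx x) \<and> ii (T x) = idx x \<and> 0 \<le> T x \<and> T x < 1"
proof -
  define i where "i = idx x"
  have i: "i \<in> {1..n}" "b (i-1) \<le> x" "x < b i" using idx_prop[OF x] by (auto simp: i_def)
  have Tx: "T x = x - b (i-1) + bt (\<tau> i - 1)" by (simp add: T_eq sh_def i_def)
  have l: "b i - b (i-1) = a i" "bt (\<tau> i) - bt (\<tau> i - 1) = a i" using blen[OF i(1)] btlen[OF i(1)] by auto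
  have t: "\<tau> i \<in> {1..n}" using tau_in[OF i(1)] .
  have A: "bt (\<tau> i - 1) \<le> T x" "T x < bt (\<tau> i)" using Tx i l by auto
  have B: "idxt (T x) = \<tau> i" using idxt_eq[OF t A] .
  have C: "0 \<le> T x" "T x < 1" using A bt_nonneg[of "\<tau> i - 1", OF le_trans[OF diff_le_self]] bt_le1[of "\<tau> i"] t by (auto simp del: One_nat_def)
  show ?thesis using A B C by (simp add: ii_def i_def)
qed

lemma Td_piece:
  assumes x: "0 < x" "x \<le> 1"
  shows "bt (\<tau> (idxd x) - 1) < Td x \<and> Td x \<le> bt (\<tau> (idxd x)) \<and> idxtd (Td x) = \<tau> (idxd x) \<and> iid (Td x) = idxd x \<and> 0 < Td x \<and> Td x \<le> 1"
proof -
  define i where "i = idxd x"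
  have i: "i \<in> {1..n}" "b (i-1) < x" "x \<le> b i" using idxd_prop[OF x] by (auto simp: i_def)
  have Tx: "Td x = x - b (i-1) + bt (\<tau> i - 1)" by (simp add: Td_eq sh_def i_def)
  have l: "b i - b (i-1) = a i" "bt (\<tau> i) - bt (\<tau> i - 1) = a i" using blen[OF i(1)] btlen[OF i(1)] by auto
  have t: "\<tau> i \<in> {1..n}" using tau_in[OF i(1)] .
  have A: "bt (\<tau> i - 1) < Td x" "Td x \<le> bt (\<tau> i)" using Tx i l by auto
  have B: "idxtd (Td x) = \<tau> i" using idxtd_eq[OF t A] .
  have C: "0 < Td x" "Td x \<le> 1" using A bt_nonneg[of "\<tau> i - 1", OF le_trans[OF diff_le_self]] bt_le1[of "\<tau> i"] t by (auto simp del: One_nat_def)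
  show ?thesis using A B C by (simp add: iid_def i_def)
qed

lemma Ti_piece:
  assumes y: "0 \<le> y" "y < 1"
  shows "ii y \<in> {1..n} \<and> bt (\<tau> (ii y) - 1) \<le> y \<and> y < bt (\<tau> (ii y)) \<and> b (ii y - 1) \<le> Ti y \<and> Ti y < b (ii y) \<and> idx (Ti y) = ii y \<and> 0 \<le> Ti y \<and> Ti y < 1 \<and> T (Ti y) = y"
proof -
  define m where "m = idxt y"
  define i where "i = inv \<tau> m"
  have m: "m \<in> {1..n}" "bt (m-1) \<le> y" "y < bt m" using idxt_prop[OF y] by (auto simp: m_def)
  have i: "i \<in> {1..n}" "\<tau> i = m" using invtau_in[OF m(1)] by (auto simp: i_def)
  have Ty: "Ti y = y - bt (m - 1) + b (i-1)" by (simp add: Ti_def ii_def sh_def i_def m_def)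
  have l: "b i - b (i-1) = a i" "bt m - bt (m - 1) = a i" using blen[OF i(1)] btlen[OF i(1)] i by auto
  have A: "b (i - 1) \<le> Ti y" "Ti y < b i" using Ty m l by auto
  have B: "idx (Ti y) = i" using idx_eq[OF i(1) A] .
  have C: "0 \<le> Ti y" "Ti y < 1" using A b_nonneg[of "i - 1", OF le_trans[OF diff_le_self]] b_le1[of i] i by (auto simp del: One_nat_def)
  have E: "T (Ti y) = y" using B by (simp add: T_eq Ty sh_def i)
  show ?thesis using A B C E m i by (simp add: ii_def i_def m_def)
qed

lemma Tdi_piece:
  assumes y: "0 < y" "y \<le> 1"
  shows "iid y \<in> {1..n} \<and> bt (\<tau> (iid y) - 1) < y \<and> y \<le> bt (\<tau> (iid y)) \<and> b (iid y - 1) < Tdi y \<and> Tdi y \<le> b (iid y) \<and> idxd (Tdi y) = iid y \<and> 0 < Tdi y \<and> Tdi y \<le> 1 \<and> Td (Tdi y) = y"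
proof -
  define m where "m = idxtd y"
  define i where "i = inv \<tau> m"
  have m: "m \<in> {1..n}" "bt (m-1) < y" "y \<le> bt m" using idxtd_prop[OF y] by (auto simp: m_def)
  have i: "i \<in> {1..n}" "\<tau> i = m" using invtau_in[OF m(1)] by (auto simp: i_def)
  have Ty: "Tdi y = y - bt (m - 1) + b (i-1)" by (simp add: Tdi_def iid_def sh_def i_def m_def)
  have l: "b i - b (i-1) = a i" "bt m - bt (m - 1) = a i" using blen[OF i(1)] btlen[OF i(1)] i by auto
  have A: "b (i - 1) < Tdi y" "Tdi y \<le> b i" using Ty m l by auto
  have B: "idxd (Tdi y) = i" using idxd_eq[OF i(1) A] .
  have C: "0 < Tdi y" "Tdi y \<le> 1" using A b_nonneg[of "i - 1", OF le_trans[OF diff_le_self]] b_le1[of i] i by (auto simp del: One_nat_def)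
  have E: "Td (Tdi y) = y" using B by (simp add: Td_eq Ty sh_def i)
  show ?thesis using A B C E m i by (simp add: iid_def i_def m_def)
qed

lemma Ti_T: "0 \<le> x \<Longrightarrow> x < 1 \<Longrightarrow> Ti (T x) = x"
  using T_piece[of x] by (simp add: Ti_def T_eq)
lemma Tdi_Td: "0 < x \<Longrightarrow> x \<le> 1 \<Longrightarrow> Tdi (Td x) = x"
  using Td_piece[of x] by (simp add: Tdi_def Td_eq)

lemma T_bij: "bij_betw T {0..<1} {0..<1}"
  by (rule bij_betw_byWitness[where f'=Ti]) (auto simp: Ti_T Ti_piece T_piece)
lemma Td_bij: "bij_betw Td {0<..1} {0<..1}"
  by (rule bij_betw_byWitness[where f'=Tdi]) (auto simp: Tdi_Td Tdi_piece Td_piece)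

lemma invT: "y \<in> {0..<1} \<Longrightarrow> inv_into {0..<1} T y = Ti y"
  using Ti_piece[of y] T_bij by (intro inv_into_f_eq) (auto simp: bij_betw_def)
lemma invTd: "y \<in> {0<..1} \<Longrightarrow> inv_into {0<..1} Td y = Tdi y"
  using Tdi_piece[of y] Td_bij by (intro inv_into_f_eq) (auto simp: bij_betw_def)

lemma Tpow_gp: "iet_Tpow n a \<tau> = gp T {0..<1}"
  by (intro ext) (simp add: iet_Tpow_def gp_def)
lemma Tdpow_gp: "iet_Tdpow n a \<tau> = gp Td {0<..1}"
  by (intro ext) (simp add: iet_Tdpow_def gp_def)

abbreviation I where "I \<equiv> itin n a \<tau>"
abbreviation Id where "Id \<equiv> itin_d n a \<tau>"

lemma I_def': "I x k = idx (gp T {0..<1} k x)"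
  by (simp add: itin_def idx_def Tpow_gp)
lemma Id_def': "Id x k = idxd (gp Td {0<..1} k x)"
  by (simp add: itin_d_def idxd_def Tdpow_gp)

lemma T_in: "x \<in> {0..<1} \<Longrightarrow> T x \<in> {0..<1}" using T_piece by auto
lemma Td_in: "x \<in> {0<..1} \<Longrightarrow> Td x \<in> {0<..1}" using Td_piece by auto
lemma Ti_in: "x \<in> {0..<1} \<Longrightarrow> Ti x \<in> {0..<1}" using Ti_piece by auto
lemma Tdi_in: "x \<in> {0<..1} \<Longrightarrow> Tdi x \<in> {0<..1}" using Tdi_piece by auto

lemma invpow: "x \<in> {0..<1} \<Longrightarrow> (inv_into {0..<1} T ^^ m) x = (Ti ^^ m) x"
  using funpow_inv_agree[of "{0..<1}" "inv_into {0..<1} T" Ti x m] invT Ti_in by metis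
lemma invdpow: "x \<in> {0<..1} \<Longrightarrow> (inv_into {0<..1} Td ^^ m) x = (Tdi ^^ m) x"
  using funpow_inv_agree[of "{0<..1}" "inv_into {0<..1} Td" Tdi x m] invTd Tdi_in by metis

lemma I_nat: "x \<in> {0..<1} \<Longrightarrow> I x (int j) = idx ((T^^j) x)"
  by (simp add: I_def' gp_nat)
lemma Id_nat: "x \<in> {0<..1} \<Longrightarrow> Id x (int j) = idxd ((Td^^j) x)"
  by (simp add: Id_def' gp_nat)
lemma I_neg: "x \<in> {0..<1} \<Longrightarrow> I x (- int (Suc m)) = ii ((Ti^^m) x)"
proof -
  assume x: "x \<in> {0..<1}"
  have "I x (- int (Suc m)) = idx ((Ti^^Suc m) x)" using invpow[OF x, of "Suc m"] by (simp only: I_def' gp_neg)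
  also have "\<dots> = ii ((Ti^^m) x)" using Ti_piece fpow_in[of "{0..<1}" Ti, OF Ti_in x, of m] by auto
  finally show ?thesis .
qed
lemma Id_neg: "x \<in> {0<..1} \<Longrightarrow> Id x (- int (Suc m)) = iid ((Tdi^^m) x)"
proof -
  assume x: "x \<in> {0<..1}"
  have "Id x (- int (Suc m)) = idxd ((Tdi^^Suc m) x)" using invdpow[OF x, of "Suc m"] by (simp only: Id_def' gp_neg)
  also have "\<dots> = iid ((Tdi^^m) x)" using Tdi_piece fpow_in[of "{0<..1}" Tdi, OF Tdi_in x, of m] by auto
  finally show ?thesis .
qed

lemma shift_I: "x \<in> {0..<1} \<Longrightarrow> shiftk k (I x) = I (gp T {0..<1} k x) \<and> gp T {0..<1} k x \<in> {0..<1}"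
  using gp_add[OF T_bij] gp_in[OF T_bij] by (auto simp: shiftk_def I_def' fun_eq_iff)
lemma shift_Id: "x \<in> {0<..1} \<Longrightarrow> shiftk k (Id x) = Id (gp Td {0<..1} k x) \<and> gp Td {0<..1} k x \<in> {0<..1}"
  using gp_add[OF Td_bij] gp_in[OF Td_bij] by (auto simp: shiftk_def Id_def' fun_eq_iff)

end


context iet begin

lemma D_def': "D = b ` {1..n-1}" by (simp add: iet_D_def)
lemma keaneD: "d \<in> D \<Longrightarrow> 1 \<le> k \<Longrightarrow> (T^^k) d \<in> D \<Longrightarrow> False"
  using kea unfolding keane_def by blast
lemma D_in: "d \<in> D \<Longrightarrow> 0 < d \<and> d < 1"
proof -
  assume "d \<in> D"
  then obtain m where m: "m \<in> {1..n-1}" "d = b m" by (auto simp: D_def')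
  then show ?thesis using b_lt[of 0 m] b_lt[of m n] bn n2 by auto
qed

lemma tau1: "\<tau> 1 \<noteq> 1"
proof
  assume "\<tau> 1 = 1"
  then have "\<tau> ` {1..1} = {1..1}" by simp
  moreover have "(1::nat) \<in> {1..n-1}" using n2 by simp
  ultimately show False using irr unfolding irreducible_perm_def by blast
qed

lemma T_eq_0: assumes x: "0 \<le> x" "x < 1" and T0: "T x = 0" shows "x \<in> D"
proof -
  define i where "i = idx x"
  have i: "i \<in> {1..n}" "b (i-1) \<le> x" "x < b i" using idx_prop[OF x] by (auto simp: i_def)
  have Tx: "T x = x - b (i-1) + bt (\<tau> i - 1)" by (simp add: T_eq sh_def i_def)
  have t: "\<tau> i \<in> {1..n}" using tau_in[OF i(1)] .
  have "0 \<le> bt (\<tau> i - 1)" using bt_nonneg[of "\<tau> i - 1"] t by auto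
  then have e: "x = b (i-1)" "bt (\<tau> i - 1) = 0" using Tx T0 i by auto
  then have "\<tau> i - 1 = 0" using bt_inj[of "\<tau> i - 1" 0] t by auto
  then have "\<tau> i = 1" using t by auto
  then have "i \<noteq> 1" using tau1 by auto
  then have "i - 1 \<in> {1..n-1}" using i by auto
  then show ?thesis using e by (auto simp: D_def')
qed

lemma Tpow_in: "x \<in> {0..<1} \<Longrightarrow> (T^^k) x \<in> {0..<1}" using fpow_in[of "{0..<1}" T, OF T_in] by blast
lemma Tdpow_in: "x \<in> {0<..1} \<Longrightarrow> (Td^^k) x \<in> {0<..1}" using fpow_in[of "{0<..1}" Td, OF Td_in] by blast
lemma Tipow_in: "x \<in> {0..<1} \<Longrightarrow> (Ti^^k) x \<in> {0..<1}" using fpow_in[of "{0..<1}" Ti, OF Ti_in] by blast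
lemma Tdipow_in: "x \<in> {0<..1} \<Longrightarrow> (Tdi^^k) x \<in> {0<..1}" using fpow_in[of "{0<..1}" Tdi, OF Tdi_in] by blast

lemma T_p1: "z \<in> {0..<1} \<Longrightarrow> b (idx z - 1) \<le> z \<and> z < b (idx z)" using idx_prop by auto
lemma T_p2: "i \<in> idx ` {0..<1} \<Longrightarrow> b (i - 1) \<le> z \<Longrightarrow> z < b i \<Longrightarrow> z \<in> {0..<1} \<and> idx z = i"
proof -
  assume "i \<in> idx ` {0..<1}" and z: "b (i - 1) \<le> z" "z < b i"
  then have i: "i \<in> {1..n}" using idx_prop by auto
  have "0 \<le> b (i-1)" "b i \<le> 1" using b_nonneg[of "i-1"] b_le1[of i] i by auto
  then show ?thesis using idx_eq[OF i z] z by auto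
qed
lemma Td_p1: "z \<in> {0<..1} \<Longrightarrow> b (idxd z - 1) < z \<and> z \<le> b (idxd z)" using idxd_prop by auto
lemma Td_p2: "i \<in> idxd ` {0<..1} \<Longrightarrow> b (i - 1) < z \<Longrightarrow> z \<le> b i \<Longrightarrow> z \<in> {0<..1} \<and> idxd z = i"
proof -
  assume "i \<in> idxd ` {0<..1}" and z: "b (i - 1) < z" "z \<le> b i"
  then have i: "i \<in> {1..n}" using idxd_prop by auto
  have "0 \<le> b (i-1)" "b i \<le> 1" using b_nonneg[of "i-1"] b_le1[of i] i by auto
  then show ?thesis using idxd_eq[OF i z] z by auto
qed
lemma Ti_p1: "z \<in> {0..<1} \<Longrightarrow> bt (\<tau> (ii z) - 1) \<le> z \<and> z < bt (\<tau> (ii z))" using Ti_piece by auto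
lemma Ti_p2: "i \<in> ii ` {0..<1} \<Longrightarrow> bt (\<tau> i - 1) \<le> z \<Longrightarrow> z < bt (\<tau> i) \<Longrightarrow> z \<in> {0..<1} \<and> ii z = i"
proof -
  assume "i \<in> ii ` {0..<1}" and z: "bt (\<tau> i - 1) \<le> z" "z < bt (\<tau> i)"
  then have i: "i \<in> {1..n}" using Ti_piece by auto
  have t: "\<tau> i \<in> {1..n}" using tau_in[OF i] .
  have "0 \<le> bt (\<tau> i - 1)" "bt (\<tau> i) \<le> 1" using bt_nonneg[of "\<tau> i - 1"] bt_le1[of "\<tau> i"] t by auto
  then show ?thesis using idxt_eq[OF t z] z by (auto simp: ii_def)
qed
lemma Tdi_p1: "z \<in> {0<..1} \<Longrightarrow> bt (\<tau> (iid z) - 1) < z \<and> z \<le> bt (\<tau> (iid z))" using Tdi_piece by auto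
lemma Tdi_p2: "i \<in> iid ` {0<..1} \<Longrightarrow> bt (\<tau> i - 1) < z \<Longrightarrow> z \<le> bt (\<tau> i) \<Longrightarrow> z \<in> {0<..1} \<and> iid z = i"
proof -
  assume "i \<in> iid ` {0<..1}" and z: "bt (\<tau> i - 1) < z" "z \<le> bt (\<tau> i)"
  then have i: "i \<in> {1..n}" using Tdi_piece by auto
  have t: "\<tau> i \<in> {1..n}" using tau_in[OF i] .
  have "0 \<le> bt (\<tau> i - 1)" "bt (\<tau> i) \<le> 1" using bt_nonneg[of "\<tau> i - 1"] bt_le1[of "\<tau> i"] t by auto
  then show ?thesis using idxtd_eq[OF t z] z by (auto simp: iid_def)
qed

lemma Ti_eq: "Ti z = z + (\<lambda>i. - sh i) (ii z)" by (simp add: Ti_def)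
lemma Tdi_eq: "Tdi z = z + (\<lambda>i. - sh i) (iid z)" by (simp add: Tdi_def)

end

context iet begin
lemma noper_T: assumes x: "x \<in> {0..<1}" and p: "0 < p" shows "(T^^p) x \<noteq> x"
proof
  assume per: "(T^^p) x = x"
  have S01: "{0..<1} \<subseteq> {0..1::real}" by auto
  have "\<exists>u\<in>{0..<1}. (T^^p) u = u \<and> (\<exists>j<p. (T^^j) u = b (idx ((T^^j) u) - 1))"
    by (rule cyl_generic[where S="{0..<1}" and f=T and \<iota>=idx and s=sh and l="\<lambda>i. b (i-1)" and r=b,
        OF S01 T_in T_eq T_p1 T_p2 x p per])
  then obtain u where u0: "u \<in> {0..<1}" "(T^^p) u = u" "\<exists>j<p. (T^^j) u = b (idx ((T^^j) u) - 1)" by blast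
  then obtain j where "j < p" "(T^^j) u = b (idx ((T^^j) u) - 1)" by blast
  note u = u0(1,2) this
  define v where "v = (T^^j) u"
  have v: "v \<in> {0..<1}" using Tpow_in[OF u(1)] by (simp add: v_def)
  have vper: "(T^^p) v = v"
  proof -
    have "(T^^p) v = (T^^(p+j)) u" by (simp add: v_def funpow_add)
    also have "\<dots> = (T^^j) ((T^^p) u)" by (simp only: add.commute[of p j] funpow_add o_apply)
    finally show ?thesis using u(2) by (simp add: v_def)
  qed
  define i where "i = idx v"
  have i: "i \<in> {1..n}" "v = b (i-1)" using idx_prop v u(4) by (auto simp: i_def v_def)
  show False
  proof (cases "i = 1")
    case False
    then have "i - 1 \<in> {1..n-1}" using i by auto
    then have "v \<in> D" using i(2) unfolding D_def' by blast
    then show ?thesis using keaneD[of v p] vper p by simp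
  next
    case True
    then have v0: "v = 0" using i by simp
    define w where "w = (T^^(p-1)) v"
    have w: "w \<in> {0..<1}" using Tpow_in[OF v] by (simp add: w_def)
    have pp: "p = Suc (p - 1)" using p by simp
    have "(T^^p) v = (T^^Suc (p-1)) v" by (subst pp) (rule refl)
    then have "T w = (T^^p) v" unfolding w_def by simp
    then have "T w = 0" using vper v0 by simp
    then have wD: "w \<in> D" using T_eq_0 w by auto
    have "(T^^p) w = (T^^(p + (p-1))) v" by (simp add: w_def funpow_add)
    also have "\<dots> = (T^^((p-1) + p)) v" by (rule arg_cong[where f="\<lambda>k. (T^^k) v"]) simp
    also have "\<dots> = (T^^(p-1)) ((T^^p) v)" by (simp add: funpow_add)
    finally have "(T^^p) w = (T^^(p-1)) ((T^^p) v)" .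
    then have "(T^^p) w = w" using vper by (simp add: w_def)
    then show False using keaneD[OF wD, of p] wD p by simp
  qed
qed

end

context iet begin
lemma T_Tipow: "y \<in> {0..<1} \<Longrightarrow> (T^^p) ((Ti^^p) y) = y"
proof (induction p arbitrary: y)
  case (Suc p)
  have "(T^^Suc p) ((Ti^^Suc p) y) = (T^^p) (T (Ti ((Ti^^p) y)))" by (simp only: funpow_Suc_right[of p T] funpow.simps(2)[of p Ti] o_apply)
  also have "\<dots> = (T^^p) ((Ti^^p) y)" using Ti_piece Tipow_in[OF Suc.prems, of p] by auto
  finally show ?case using Suc by simp
qed simp
lemma Td_Tdipow: "y \<in> {0<..1} \<Longrightarrow> (Td^^p) ((Tdi^^p) y) = y"
proof (induction p arbitrary: y)
  case (Suc p)
  have "(Td^^Suc p) ((Tdi^^Suc p) y) = (Td^^p) (Td (Tdi ((Tdi^^p) y)))" by (simp only: funpow_Suc_right[of p Td] funpow.simps(2)[of p Tdi] o_apply)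
  also have "\<dots> = (Td^^p) ((Tdi^^p) y)" using Tdi_piece Tdipow_in[OF Suc.prems, of p] by auto
  finally show ?case using Suc by simp
qed simp

lemma noper_Ti: "x \<in> {0..<1} \<Longrightarrow> 0 < p \<Longrightarrow> (Ti^^p) x \<noteq> x"
proof
  assume x: "x \<in> {0..<1}" and p: "0 < p" and e: "(Ti^^p) x = x"
  have "(T^^p) x = x" using T_Tipow[OF x, of p] e by simp
  then show False using noper_T[OF x p] by simp
qed

end

context iet begin
lemma approx_T_Td:
  assumes v: "v \<in> {0<..1}"
  shows "\<exists>\<delta>>0. \<forall>e\<in>{-\<delta><..<0}. \<forall>j\<le>p. (T^^j) (v+e) = (Td^^j) v + e \<and> (T^^j) (v+e) \<in> {0..<1} \<and> idx ((T^^j) (v+e)) = idxd ((Td^^j) v)"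
proof (rule approx_generic[where E="\<lambda>\<delta>. {-\<delta><..<0}" and s=sh, OF Td_in Td_eq T_eq _ _ v])
  fix w :: real assume w: "w \<in> {0<..1}"
  define i where "i = idxd w"
  have i: "i \<in> {1..n}" "b (i-1) < w" "w \<le> b i" using idxd_prop w by (auto simp: i_def)
  have pos: "0 < w - b (i-1)" using i by simp
  have "\<forall>e\<in>{- (w - b (i-1))<..<0}. w + e \<in> {0..<1} \<and> idx (w + e) = idxd w"
  proof (rule ballI)
    fix e assume e: "e \<in> {- (w - b (i - 1))<..<0}"
    have h: "b (i-1) \<le> w + e" "w + e < b i" using e i by auto
    have "0 \<le> b (i-1)" "b i \<le> 1" using b_nonneg[of "i-1"] b_le1[of i] i by auto
    then show "w + e \<in> {0..<1} \<and> idx (w + e) = idxd w" using idx_eq[OF i(1) h] h unfolding i_def by auto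
  qed
  then show "\<exists>\<delta>>0. \<forall>e\<in>{- \<delta><..<0}. w + e \<in> {0..<1} \<and> idx (w + e) = idxd w" using pos by blast
qed auto

end

context iet begin

lemma approx_T_T:
  assumes v: "v \<in> {0..<1}"
  shows "\<exists>\<delta>>0. \<forall>e\<in>{0..<\<delta>}. \<forall>j\<le>p. (T^^j) (v+e) = (T^^j) v + e \<and> (T^^j) (v+e) \<in> {0..<1} \<and> idx ((T^^j) (v+e)) = idx ((T^^j) v)"
proof (rule approx_generic[where E="\<lambda>\<delta>. {0..<\<delta>}" and s=sh, OF T_in T_eq T_eq _ _ v])
  fix w :: real assume w: "w \<in> {0..<1}"
  define i where "i = idx w"
  have i: "i \<in> {1..n}" "b (i-1) \<le> w" "w < b i" using idx_prop w by (auto simp: i_def)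
  have pos: "0 < b i - w" using i by simp
  have "\<forall>e\<in>{0..<b i - w}. w + e \<in> {0..<1} \<and> idx (w + e) = idx w"
  proof (rule ballI)
    fix e assume e: "e \<in> {0..<b i - w}"
    have h: "b (i-1) \<le> w + e" "w + e < b i" using e i by auto
    have "0 \<le> b (i-1)" "b i \<le> 1" using b_nonneg[of "i-1"] b_le1[of i] i by auto
    then show "w + e \<in> {0..<1} \<and> idx (w + e) = idx w" using idx_eq[OF i(1) h] h unfolding i_def by auto
  qed
  then show "\<exists>\<delta>>0. \<forall>e\<in>{0..<\<delta>}. w + e \<in> {0..<1} \<and> idx (w + e) = idx w" using pos by blast
qed auto

lemma approx_Ti_Tdi:
  assumes v: "v \<in> {0<..1}"
  shows "\<exists>\<delta>>0. \<forall>e\<in>{-\<delta><..<0}. \<forall>j\<le>p. (Ti^^j) (v+e) = (Tdi^^j) v + e \<and> (Ti^^j) (v+e) \<in> {0..<1} \<and> ii ((Ti^^j) (v+e)) = iid ((Tdi^^j) v)"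
proof (rule approx_generic[where E="\<lambda>\<delta>. {-\<delta><..<0}" and s="\<lambda>i. - sh i", OF Tdi_in Tdi_eq Ti_eq _ _ v])
  fix w :: real assume w: "w \<in> {0<..1}"
  define i where "i = iid w"
  have i: "i \<in> {1..n}" "bt (\<tau> i - 1) < w" "w \<le> bt (\<tau> i)" using Tdi_piece w by (auto simp: i_def)
  have pos: "0 < w - bt (\<tau> i - 1)" using i by simp
  have "\<forall>e\<in>{- (w - bt (\<tau> i - 1))<..<0}. w + e \<in> {0..<1} \<and> ii (w + e) = iid w"
  proof (rule ballI)
    fix e assume e: "e \<in> {- (w - bt (\<tau> i - 1))<..<0}"
    have h: "bt (\<tau> i - 1) \<le> w + e" "w + e < bt (\<tau> i)" using e i by auto
    have "i \<in> ii ` {0..<1}" using Ti_piece[of "T (b (i-1))"] T_piece[of "b (i-1)"] b_nonneg[of "i-1"] b_lt[of "i-1" n] bn i idx_eq[of i "b (i-1)"] b_lt[of "i-1" i]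
      by (intro image_eqI[of _ _ "T (b (i-1))"]) auto
    then show "w + e \<in> {0..<1} \<and> ii (w + e) = iid w" using Ti_p2[of i "w+e"] h unfolding i_def by auto
  qed
  then show "\<exists>\<delta>>0. \<forall>e\<in>{-\<delta><..<0}. w + e \<in> {0..<1} \<and> ii (w + e) = iid w" using pos by blast
qed auto

lemma approx_Ti_Ti:
  assumes v: "v \<in> {0..<1}"
  shows "\<exists>\<delta>>0. \<forall>e\<in>{0..<\<delta>}. \<forall>j\<le>p. (Ti^^j) (v+e) = (Ti^^j) v + e \<and> (Ti^^j) (v+e) \<in> {0..<1} \<and> ii ((Ti^^j) (v+e)) = ii ((Ti^^j) v)"
proof (rule approx_generic[where E="\<lambda>\<delta>. {0..<\<delta>}" and s="\<lambda>i. - sh i", OF Ti_in Ti_eq Ti_eq _ _ v])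
  fix w :: real assume w: "w \<in> {0..<1}"
  define i where "i = ii w"
  have i: "i \<in> {1..n}" "bt (\<tau> i - 1) \<le> w" "w < bt (\<tau> i)" using Ti_piece w by (auto simp: i_def)
  have pos: "0 < bt (\<tau> i) - w" using i by simp
  have "\<forall>e\<in>{0..<bt (\<tau> i) - w}. w + e \<in> {0..<1} \<and> ii (w + e) = ii w"
  proof (rule ballI)
    fix e assume e: "e \<in> {0..<bt (\<tau> i) - w}"
    have h: "bt (\<tau> i - 1) \<le> w + e" "w + e < bt (\<tau> i)" using e i by auto
    have "i \<in> ii ` {0..<1}" using w by (simp add: i_def)
    then show "w + e \<in> {0..<1} \<and> ii (w + e) = ii w" using Ti_p2[of i "w+e"] h unfolding i_def by auto
  qed
  then show "\<exists>\<delta>>0. \<forall>e\<in>{0..<\<delta>}. w + e \<in> {0..<1} \<and> ii (w + e) = ii w" using pos by blast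
qed auto

lemma noper_Td: assumes v: "v \<in> {0<..1}" and p: "0 < p" shows "(Td^^p) v \<noteq> v"
proof
  assume per: "(Td^^p) v = v"
  obtain \<delta> where d: "\<delta> > 0" "\<forall>e\<in>{-\<delta><..<0}. \<forall>j\<le>p. (T^^j) (v+e) = (Td^^j) v + e \<and> (T^^j) (v+e) \<in> {0..<1} \<and> idx ((T^^j) (v+e)) = idxd ((Td^^j) v)"
    using approx_T_Td[OF v, of p] by blast
  have e: "- \<delta>/2 \<in> {-\<delta><..<0}" using d(1) by simp
  note P = bspec[OF d(2) e]
  have h1: "(T^^p) (v + - \<delta>/2) = (Td^^p) v + - \<delta>/2" using P[rule_format, OF order_refl] by blast
  have "(T^^0) (v + - \<delta>/2) \<in> {0..<1}" using P[rule_format, of 0] by blast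
  then have h2: "v + - \<delta>/2 \<in> {0..<1}" by simp
  note h = h1 h2
  then show False using noper_T[OF h(2) p] per by simp
qed

lemma noper_Tdi: "x \<in> {0<..1} \<Longrightarrow> 0 < p \<Longrightarrow> (Tdi^^p) x \<noteq> x"
proof
  assume x: "x \<in> {0<..1}" and p: "0 < p" and e: "(Tdi^^p) x = x"
  have "(Td^^p) x = x" using Td_Tdipow[OF x, of p] e by simp
  then show False using noper_Td[OF x p] by simp
qed

lemma conv_T: "u \<in> {0..<1} \<Longrightarrow> w \<in> {0..<1} \<Longrightarrow> u \<le> v \<Longrightarrow> v \<le> w \<Longrightarrow> idx u = idx w \<Longrightarrow> v \<in> {0..<1} \<and> idx v = idx w"
proof -
  assume u: "u \<in> {0..<1}" and w: "w \<in> {0..<1}" and uv: "u \<le> v" and vw: "v \<le> w" and e: "idx u = idx w"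
  have "idx w \<in> idx ` {0..<1}" using w by blast
  moreover have "b (idx w - 1) \<le> v" "v < b (idx w)" using T_p1[OF u] T_p1[OF w] e uv vw by auto
  ultimately show ?thesis using T_p2 by blast
qed
lemma conv_Td: "u \<in> {0<..1} \<Longrightarrow> w \<in> {0<..1} \<Longrightarrow> u \<le> v \<Longrightarrow> v \<le> w \<Longrightarrow> idxd u = idxd w \<Longrightarrow> v \<in> {0<..1} \<and> idxd v = idxd w"
proof -
  assume u: "u \<in> {0<..1}" and w: "w \<in> {0<..1}" and uv: "u \<le> v" and vw: "v \<le> w" and e: "idxd u = idxd w"
  have "idxd w \<in> idxd ` {0<..1}" using w by blast
  moreover have "b (idxd w - 1) < v" "v \<le> b (idxd w)" using Td_p1[OF u] Td_p1[OF w] e uv vw by auto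
  ultimately show ?thesis using Td_p2 by blast
qed
lemma conv_Ti: "u \<in> {0..<1} \<Longrightarrow> w \<in> {0..<1} \<Longrightarrow> u \<le> v \<Longrightarrow> v \<le> w \<Longrightarrow> ii u = ii w \<Longrightarrow> v \<in> {0..<1} \<and> ii v = ii w"
proof -
  assume u: "u \<in> {0..<1}" and w: "w \<in> {0..<1}" and uv: "u \<le> v" and vw: "v \<le> w" and e: "ii u = ii w"
  have "ii w \<in> ii ` {0..<1}" using w by blast
  moreover have "bt (\<tau> (ii w) - 1) \<le> v" "v < bt (\<tau> (ii w))" using Ti_p1[OF u] Ti_p1[OF w] e uv vw by auto
  ultimately show ?thesis using Ti_p2 by blast
qed
lemma conv_Tdi: "u \<in> {0<..1} \<Longrightarrow> w \<in> {0<..1} \<Longrightarrow> u \<le> v \<Longrightarrow> v \<le> w \<Longrightarrow> iid u = iid w \<Longrightarrow> v \<in> {0<..1} \<and> iid v = iid w"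
proof -
  assume u: "u \<in> {0<..1}" and w: "w \<in> {0<..1}" and uv: "u \<le> v" and vw: "v \<le> w" and e: "iid u = iid w"
  have "iid w \<in> iid ` {0<..1}" using w by blast
  moreover have "bt (\<tau> (iid w) - 1) < v" "v \<le> bt (\<tau> (iid w))" using Tdi_p1[OF u] Tdi_p1[OF w] e uv vw by auto
  ultimately show ?thesis using Tdi_p2 by blast
qed

lemma S01a: "{0..<1} \<subseteq> {0..1::real}" by auto
lemma S01b: "{0<..1} \<subseteq> {0..1::real}" by auto

lemma inj_T: "x \<in> {0..<1} \<Longrightarrow> y \<in> {0..<1} \<Longrightarrow> (\<And>j. idx ((T^^j) x) = idx ((T^^j) y)) \<Longrightarrow> x = y"
  by (rule inj_generic[where S="{0..<1}" and f=T and \<iota>=idx and s=sh, OF S01a T_in T_eq conv_T noper_T])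
lemma inj_Td: "x \<in> {0<..1} \<Longrightarrow> y \<in> {0<..1} \<Longrightarrow> (\<And>j. idxd ((Td^^j) x) = idxd ((Td^^j) y)) \<Longrightarrow> x = y"
  by (rule inj_generic[where S="{0<..1}" and f=Td and \<iota>=idxd and s=sh, OF S01b Td_in Td_eq conv_Td noper_Td])
lemma inj_Ti: "x \<in> {0..<1} \<Longrightarrow> y \<in> {0..<1} \<Longrightarrow> (\<And>j. ii ((Ti^^j) x) = ii ((Ti^^j) y)) \<Longrightarrow> x = y"
  by (rule inj_generic[where S="{0..<1}" and f=Ti and \<iota>=ii and s="\<lambda>i. - sh i", OF S01a Ti_in Ti_eq conv_Ti noper_Ti])
lemma inj_Tdi: "x \<in> {0<..1} \<Longrightarrow> y \<in> {0<..1} \<Longrightarrow> (\<And>j. iid ((Tdi^^j) x) = iid ((Tdi^^j) y)) \<Longrightarrow> x = y"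
  by (rule inj_generic[where S="{0<..1}" and f=Tdi and \<iota>=iid and s="\<lambda>i. - sh i", OF S01b Tdi_in Tdi_eq conv_Tdi noper_Tdi])

lemma mixed_fwd: "x \<in> {0..<1} \<Longrightarrow> y \<in> {0<..1} \<Longrightarrow> (\<And>j. idx ((T^^j) x) = idxd ((Td^^j) y)) \<Longrightarrow> x = y"
  by (rule mixed_generic[where Sf="{0..<1}" and Sg="{0<..1}" and f=T and g=Td and \<iota>f=idx and \<iota>g=idxd and s=sh
        and l="\<lambda>i. b (i-1)" and r=b, OF T_in T_eq Td_in Td_eq T_p1 T_p2 Td_p1 inj_T])
lemma mixed_bwd: "x \<in> {0..<1} \<Longrightarrow> y \<in> {0<..1} \<Longrightarrow> (\<And>j. ii ((Ti^^j) x) = iid ((Tdi^^j) y)) \<Longrightarrow> x = y"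
  by (rule mixed_generic[where Sf="{0..<1}" and Sg="{0<..1}" and f=Ti and g=Tdi and \<iota>f=ii and \<iota>g=iid and s="\<lambda>i. - sh i"
        and l="\<lambda>i. bt (\<tau> i - 1)" and r="\<lambda>i. bt (\<tau> i)", OF Ti_in Ti_eq Tdi_in Tdi_eq Ti_p1 Ti_p2 Tdi_p1 inj_Ti])

end

context iet begin

lemma shiftk_add: "shiftk k1 (shiftk k2 g) = shiftk (k1 + k2) g" unfolding shiftk_def by (rule ext) (simp add: ac_simps)
lemma shiftk_0[simp]: "shiftk 0 g = g" by (simp add: shiftk_def)

lemma I_fwd_inj: "x \<in> {0..<1} \<Longrightarrow> y \<in> {0..<1} \<Longrightarrow> (\<And>j. 0 \<le> j \<Longrightarrow> I x j = I y j) \<Longrightarrow> x = y"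
proof (rule inj_T)
  fix j assume "x \<in> {0..<1}" "y \<in> {0..<1}" "\<And>j. 0 \<le> j \<Longrightarrow> I x j = I y j"
  then show "idx ((T^^j) x) = idx ((T^^j) y)" using I_nat[of x j] I_nat[of y j] by fastforce
qed
lemma Id_fwd_inj: "x \<in> {0<..1} \<Longrightarrow> y \<in> {0<..1} \<Longrightarrow> (\<And>j. 0 \<le> j \<Longrightarrow> Id x j = Id y j) \<Longrightarrow> x = y"
proof (rule inj_Td)
  fix j assume "x \<in> {0<..1}" "y \<in> {0<..1}" "\<And>j. 0 \<le> j \<Longrightarrow> Id x j = Id y j"
  then show "idxd ((Td^^j) x) = idxd ((Td^^j) y)" using Id_nat[of x j] Id_nat[of y j] by fastforce
qed
lemma mixed_fwd_I: "x \<in> {0..<1} \<Longrightarrow> y \<in> {0<..1} \<Longrightarrow> (\<And>j. 0 \<le> j \<Longrightarrow> I x j = Id y j) \<Longrightarrow> x = y"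
proof (rule mixed_fwd)
  fix j assume "x \<in> {0..<1}" "y \<in> {0<..1}" "\<And>j. 0 \<le> j \<Longrightarrow> I x j = Id y j"
  then show "idx ((T^^j) x) = idxd ((Td^^j) y)" using I_nat[of x j] Id_nat[of y j] by fastforce
qed
lemma neg_idx: "(j::int) < 0 \<Longrightarrow> \<exists>m. j = - int (Suc m)"
  by (rule exI[of _ "nat (- j) - 1"]) simp
lemma I_bwd_inj: "x \<in> {0..<1} \<Longrightarrow> y \<in> {0..<1} \<Longrightarrow> (\<And>j. j < 0 \<Longrightarrow> I x j = I y j) \<Longrightarrow> x = y"
proof (rule inj_Ti)
  fix m assume "x \<in> {0..<1}" "y \<in> {0..<1}" "\<And>j. j < 0 \<Longrightarrow> I x j = I y j"
  then show "ii ((Ti^^m) x) = ii ((Ti^^m) y)" using I_neg[of x m] I_neg[of y m] by simp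
qed
lemma Id_bwd_inj: "x \<in> {0<..1} \<Longrightarrow> y \<in> {0<..1} \<Longrightarrow> (\<And>j. j < 0 \<Longrightarrow> Id x j = Id y j) \<Longrightarrow> x = y"
proof (rule inj_Tdi)
  fix m assume "x \<in> {0<..1}" "y \<in> {0<..1}" "\<And>j. j < 0 \<Longrightarrow> Id x j = Id y j"
  then show "iid ((Tdi^^m) x) = iid ((Tdi^^m) y)" using Id_neg[of x m] Id_neg[of y m] by simp
qed
lemma mixed_bwd_I: "x \<in> {0..<1} \<Longrightarrow> y \<in> {0<..1} \<Longrightarrow> (\<And>j. j < 0 \<Longrightarrow> I x j = Id y j) \<Longrightarrow> x = y"
proof (rule mixed_bwd)
  fix m assume "x \<in> {0..<1}" "y \<in> {0<..1}" "\<And>j. j < 0 \<Longrightarrow> I x j = Id y j"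
  then show "ii ((Ti^^m) x) = iid ((Tdi^^m) y)" using I_neg[of x m] Id_neg[of y m] by simp
qed

lemma idx_ne_idxd: assumes z: "z \<in> {0..<1}" "z \<in> {0<..1}" and ne: "idx z \<noteq> idxd z"
  shows "\<exists>m\<in>{1..n-1}. z = b m"
proof -
  define i where "i = idx z"
  define i' where "i' = idxd z"
  have i: "i \<in> {1..n}" "b (i-1) \<le> z" "z < b i" using idx_prop z by (auto simp: i_def)
  have i': "i' \<in> {1..n}" "b (i'-1) < z" "z \<le> b i'" using idxd_prop z by (auto simp: i'_def)
  have "i \<noteq> i'" using ne by (simp add: i_def i'_def)
  show ?thesis
  proof (cases "i < i'")
    case True
    then have "b i \<le> b (i'-1)" using b_le[of i "i'-1"] i' by auto
    then show ?thesis using i i' by simp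
  next
    case False
    then have lt: "i' < i" using \<open>i \<noteq> i'\<close> by simp
    then have "b i' \<le> b (i-1)" using b_le[of i' "i-1"] i by auto
    then have "z = b i'" using i i' by simp
    moreover have "i' \<in> {1..n-1}" using lt i i' by auto
    ultimately show ?thesis by blast
  qed
qed

lemma ii_ne_iid: assumes z: "z \<in> {0..<1}" "z \<in> {0<..1}" and ne: "ii z \<noteq> iid z"
  shows "\<exists>m\<in>{1..n-1}. z = bt m"
proof -
  define i where "i = \<tau> (ii z)"
  define i' where "i' = \<tau> (iid z)"
  have i: "i \<in> {1..n}" "bt (i-1) \<le> z" "z < bt i" using Ti_piece[of z] tau_in z by (auto simp: i_def)
  have i': "i' \<in> {1..n}" "bt (i'-1) < z" "z \<le> bt i'" using Tdi_piece[of z] tau_in z by (auto simp: i'_def)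
  have "i \<noteq> i'" using ne by (metis i_def i'_def inv_tau)
  show ?thesis
  proof (cases "i < i'")
    case True
    then have "bt i \<le> bt (i'-1)" using bt_le[of i "i'-1"] i' by auto
    then show ?thesis using i i' by simp
  next
    case False
    then have lt: "i' < i" using \<open>i \<noteq> i'\<close> by simp
    then have "bt i' \<le> bt (i-1)" using bt_le[of i' "i-1"] i by auto
    then have "z = bt i'" using i i' by simp
    moreover have "i' \<in> {1..n-1}" using lt i i' by auto
    ultimately show ?thesis by blast
  qed
qed

lemma b_notD: assumes z: "z \<in> {0..<1}" "z \<in> {0<..1}" and e: "idx z = idxd z" shows "z \<notin> D"
proof
  assume "z \<in> D"
  then obtain m where m: "m \<in> {1..n-1}" "z = b m" by (auto simp: D_def')
  define i where "i = idx z"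
  have i: "i \<in> {1..n}" "b (i-1) \<le> z" "z < b i" using idx_prop z by (auto simp: i_def)
  have i': "b (i-1) < z" "z \<le> b i" using idxd_prop[of z] z e by (auto simp: i_def)
  have "\<not> m \<le> i - 1"
  proof
    assume "m \<le> i - 1" moreover have "i - 1 \<le> n" using i(1) by auto
    ultimately have "b m \<le> b (i-1)" using b_le[of m "i-1"] by simp
    then show False using i' m by simp
  qed
  moreover have "\<not> i \<le> m"
  proof
    assume "i \<le> m" moreover have "m \<le> n" using m by auto
    ultimately have "b i \<le> b m" using b_le[of i m] by simp
    then show False using i m by simp
  qed
  ultimately show False by simp
qed

lemma good_fwd:
  assumes x: "x \<in> {0..<1}" and nD: "\<And>k. (T^^k) x \<notin> D" and n0: "\<And>k. (T^^k) x \<noteq> 0"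
  shows "(Td^^k) x = (T^^k) x \<and> idxd ((Td^^k) x) = idx ((T^^k) x)"
proof (induction k)
  case 0
  show ?case
  proof
    show "(Td^^0) x = (T^^0) x" by simp
    have xi: "idx x \<in> {1..n}" "b (idx x - 1) \<le> x" "x < b (idx x)" using idx_prop x by auto
    have "x \<noteq> b (idx x - 1)"
    proof
      assume xe: "x = b (idx x - 1)"
      show False
      proof (cases "idx x = 1")
        case True then show False using xe n0[of 0] by simp
      next
        case False then have "idx x - 1 \<in> {1..n-1}" using xi by auto
        then show False using xe nD[of 0] by (auto simp: D_def')
      qed
    qed
    then show "idxd ((Td^^0) x) = idx ((T^^0) x)" using idxd_eq[OF xi(1)] xi by simp
  qed
next
  case (Suc k)
  define q where "q = (T^^k) x"
  have q: "q \<in> {0..<1}" using Tpow_in[OF x] by (simp add: q_def)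
  have s1: "(Td^^k) x = q" "idxd q = idx q" using Suc by (auto simp: q_def)
  have e1: "(Td^^Suc k) x = (T^^Suc k) x"
  proof -
    have "(Td^^Suc k) x = Td q" using s1 by simp
    also have "\<dots> = q + sh (idx q)" using Td_eq[of q] s1 by simp
    also have "\<dots> = (T^^Suc k) x" using T_eq[of q] by (simp add: q_def)
    finally show ?thesis .
  qed
  define y where "y = (T^^Suc k) x"
  have y: "y \<in> {0..<1}" unfolding y_def by (rule Tpow_in[OF x])
  have yi: "idx y \<in> {1..n}" "b (idx y - 1) \<le> y" "y < b (idx y)" using idx_prop y by auto
  have "y \<noteq> b (idx y - 1)"
  proof
    assume ye: "y = b (idx y - 1)"
    show False
    proof (cases "idx y = 1")
      case True then show False using ye n0[of "Suc k"] by (simp add: y_def)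
    next
      case False then have "idx y - 1 \<in> {1..n-1}" using yi by auto
      then show False using ye nD[of "Suc k"] by (auto simp: D_def' y_def)
    qed
  qed
  then have "idxd y = idx y" using idxd_eq[OF yi(1)] yi by simp
  then show ?case using e1 by (simp add: y_def)
qed

abbreviation Dt where "Dt \<equiv> bt ` {1..n-1}"

lemma good_bwd:
  assumes x: "x \<in> {0..<1}" and nD: "\<And>k. (Ti^^k) x \<notin> Dt" and n0: "\<And>k. (Ti^^k) x \<noteq> 0"
  shows "(Tdi^^k) x = (Ti^^k) x \<and> iid ((Tdi^^k) x) = ii ((Ti^^k) x)"
proof -
  have gen: "iid y = ii y" if y: "y \<in> {0..<1}" and yD: "y \<notin> Dt" and y0: "y \<noteq> 0" for y
  proof -
    define m where "m = idxt y"
    have m: "m \<in> {1..n}" "bt (m-1) \<le> y" "y < bt m" using idxt_prop y by (auto simp: m_def)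
    have "y \<noteq> bt (m-1)"
    proof
      assume ye: "y = bt (m-1)"
      show False
      proof (cases "m = 1")
        case True then show False using ye y0 by simp
      next
        case False then have "m - 1 \<in> {1..n-1}" using m by auto
        then show False using ye yD by auto
      qed
    qed
    then have "idxtd y = m" using idxtd_eq[OF m(1)] m by simp
    then show ?thesis by (simp add: iid_def ii_def m_def)
  qed
  show ?thesis
  proof (induction k)
    case 0 then show ?case using nD[of 0] n0[of 0] gen[OF x] by simp
  next
    case (Suc k)
    define q where "q = (Ti^^k) x"
    have s1: "(Tdi^^k) x = q" "iid q = ii q" using Suc by (auto simp: q_def)
    have e1: "(Tdi^^Suc k) x = (Ti^^Suc k) x"
    proof -
      have "(Tdi^^Suc k) x = Tdi q" using s1 by simp
      also have "\<dots> = q - sh (ii q)" using s1 by (simp add: Tdi_def)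
      also have "\<dots> = (Ti^^Suc k) x" by (simp add: q_def Ti_def)
      finally show ?thesis .
    qed
    have y: "(Ti^^Suc k) x \<in> {0..<1}" by (rule Tipow_in[OF x])
    show ?case using e1 gen[OF y nD[of "Suc k"] n0[of "Suc k"]] by simp
  qed
qed

lemma orb0: assumes d: "d \<in> D" and k: "2 \<le> k" shows "(T^^k) d \<noteq> 0"
proof
  assume e: "(T^^k) d = 0"
  have dd: "d \<in> {0..<1}" using D_in[OF d] by auto
  have kk: "k = Suc (k-1)" using k by simp
  have "T ((T^^(k-1)) d) = 0" using e by (subst (asm) kk) simp
  then have "(T^^(k-1)) d \<in> D" using T_eq_0 Tpow_in[OF dd, of "k-1"] by auto
  moreover have "1 \<le> k - 1" using k by simp
  ultimately show False using keaneD[OF d] by blast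
qed

lemma T_b: "i \<in> {1..n} \<Longrightarrow> T (b (i-1)) = bt (\<tau> i - 1) \<and> idx (b (i-1)) = i"
proof -
  assume i: "i \<in> {1..n}"
  have h: "b (i-1) \<le> b (i-1)" "b (i-1) < b i" using b_lt[of "i-1" i] i by auto
  have "idx (b (i-1)) = i" using idx_eq[OF i h] .
  then show ?thesis by (simp add: T_eq sh_def)
qed
lemma Td_b: "i \<in> {1..n} \<Longrightarrow> Td (b i) = bt (\<tau> i) \<and> idxd (b i) = i"
proof -
  assume i: "i \<in> {1..n}"
  have h: "b (i-1) < b i" "b i \<le> b i" using b_lt[of "i-1" i] i by auto
  have e: "idxd (b i) = i" using idxd_eq[OF i h] .
  have "Td (b i) = b i - b (i-1) + bt (\<tau> i - 1)" by (simp add: Td_eq sh_def e)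
  also have "\<dots> = bt (\<tau> i)" using blen[OF i] btlen[OF i] by simp
  finally show ?thesis using e by simp
qed

lemma Ti0: "Ti 0 \<in> D \<and> T (Ti 0) = 0"
proof -
  have "T (Ti 0) = 0" using Ti_piece[of 0] by simp
  moreover have "Ti 0 \<in> {0..<1}" using Ti_piece[of 0] by simp
  ultimately show ?thesis using T_eq_0 by auto
qed

lemma btm_orbit: assumes m: "m \<in> {1..n-1}" shows "\<exists>d\<in>D. \<exists>e. 1 \<le> e \<and> bt m = (T^^e) d"
proof -
  define i where "i = inv \<tau> (m+1)"
  have i: "i \<in> {1..n}" "\<tau> i = m + 1" using invtau_in[of "m+1"] m by (auto simp: i_def)
  have Tb: "T (b (i-1)) = bt m" using T_b[OF i(1)] i by simp
  show ?thesis
  proof (cases "i = 1")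
    case False
    then have "i - 1 \<in> {1..n-1}" using i by auto
    then have "b (i-1) \<in> D" unfolding D_def' by blast
    then show ?thesis using Tb by (intro bexI[of _ "b (i-1)"] exI[of _ 1]) auto
  next
    case True
    then have "T 0 = bt m" using Tb by simp
    then have "bt m = (T^^2) (Ti 0)" using Ti0 by (simp add: numeral_2_eq_2)
    then show ?thesis using Ti0 by (intro bexI[of _ "Ti 0"] exI[of _ 2]) auto
  qed
qed

lemma Dt_or_0: "y \<in> Dt \<or> y = 0 \<Longrightarrow> \<exists>d\<in>D. \<exists>e. 1 \<le> e \<and> y = (T^^e) d"
proof -
  assume "y \<in> Dt \<or> y = 0"
  then show ?thesis
  proof
    assume "y \<in> Dt" then show ?thesis using btm_orbit by auto
  next
    assume "y = 0" then show ?thesis using Ti0 by (intro bexI[of _ "Ti 0"] exI[of _ 1]) auto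
  qed
qed

lemma bt_pos: "m \<in> {1..n} \<Longrightarrow> 0 < bt m" using bt_lt[of 0 m] by auto

lemma fwd_bt: assumes m: "m \<in> {1..n-1}" shows "\<And>j. 0 \<le> j \<Longrightarrow> I (bt m) j = Id (bt m) j"
proof -
  fix j :: int assume j: "0 \<le> j"
  obtain d e where de: "d \<in> D" "1 \<le> e" "bt m = (T^^e) d" using btm_orbit[OF m] by blast
  have mm: "m \<in> {1..n}" "m < n" using m n2 by auto
  have x: "bt m \<in> {0..<1}" "bt m \<in> {0<..1}" using bt_pos[OF mm(1)] bt_lt[OF mm(2) order_refl] btn by auto
  have dd: "d \<in> {0..<1}" using D_in[OF de(1)] by auto
  have pw: "(T^^k) (bt m) = (T^^(k+e)) d" for k by (simp add: de(3) funpow_add)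
  have nD: "(T^^k) (bt m) \<notin> D" for k using keaneD[OF de(1), of "k+e"] de(2) pw[of k] by auto
  have n0: "(T^^k) (bt m) \<noteq> 0" for k
  proof (cases k)
    case 0 then show ?thesis using bt_pos[OF mm(1)] by auto
  next
    case (Suc k') then show ?thesis using orb0[OF de(1), of "k+e"] de(2) pw[of k] by auto
  qed
  obtain t where t: "j = int t" using j by (metis nonneg_eq_int)
  have g: "(Td^^t) (bt m) = (T^^t) (bt m)" "idxd ((Td^^t) (bt m)) = idx ((T^^t) (bt m))" using good_fwd[OF x(1) nD n0, of t] by auto
  have "I (bt m) j = idx ((T^^t) (bt m))" using I_nat[OF x(1), of t] t by simp
  also have "\<dots> = idxd ((Td^^t) (bt m))" using g(2) by simp
  also have "\<dots> = Id (bt m) j" using Id_nat[OF x(2), of t] t by simp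
  finally show "I (bt m) j = Id (bt m) j" .
qed

lemma bwd_b: assumes m: "m \<in> {1..n-1}" shows "\<And>j. j < 0 \<Longrightarrow> I (b m) j = Id (b m) j"
proof -
  fix j :: int assume j: "j < 0"
  have mm: "0 < m" "m \<le> n" "m < n" using m n2 by auto
  have x: "b m \<in> {0..<1}" "b m \<in> {0<..1}" "b m \<in> D" using m b_lt[OF mm(1,2)] b_lt[OF mm(3) order_refl] bn by (auto simp: D_def')
  have bad: False if hk: "(Ti^^k) (b m) \<in> Dt \<or> (Ti^^k) (b m) = 0" for k
  proof -
    obtain d e where de: "d \<in> D" "1 \<le> e" "(Ti^^k) (b m) = (T^^e) d" using Dt_or_0[OF hk] by blast
    have "b m = (T^^k) ((Ti^^k) (b m))" using T_Tipow[OF x(1)] by simp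
    also have "\<dots> = (T^^(k+e)) d" using de(3) by (simp add: funpow_add)
    finally show False using keaneD[OF de(1), of "k+e"] x(3) de(2) by simp
  qed
  obtain t where t: "j = - int (Suc t)" using neg_idx[OF j] by blast
  have nD: "\<And>k. (Ti^^k) (b m) \<notin> Dt" and n0: "\<And>k. (Ti^^k) (b m) \<noteq> 0" using bad by blast+
  have g: "iid ((Tdi^^t) (b m)) = ii ((Ti^^t) (b m))" using good_bwd[OF x(1) nD n0, of t] by auto
  have "I (b m) j = ii ((Ti^^t) (b m))" using I_neg[OF x(1), of t] t by simp
  also have "\<dots> = iid ((Tdi^^t) (b m))" using g by simp
  also have "\<dots> = Id (b m) j" using Id_neg[OF x(2), of t] t by simp
  finally show "I (b m) j = Id (b m) j" .
qed

end

context iet begin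

definition inXf :: "(int \<Rightarrow> nat) \<Rightarrow> bool" where
  "inXf g \<longleftrightarrow> (\<exists>p\<in>{0..<1}. g = I p) \<or> (\<exists>p\<in>{0<..1}. g = Id p)"

lemma inXf_shift: "inXf g \<Longrightarrow> inXf (shiftk k g)"
  unfolding inXf_def using shift_I shift_Id by metis

lemma I_m1: "x \<in> {0..<1} \<Longrightarrow> I x (-1) = ii x" using I_neg[of x 0] by simp
lemma Id_m1: "x \<in> {0<..1} \<Longrightarrow> Id x (-1) = iid x" using Id_neg[of x 0] by simp
lemma I_0: "x \<in> {0..<1} \<Longrightarrow> I x 0 = idx x" using I_nat[of x 0] by simp
lemma Id_0: "x \<in> {0<..1} \<Longrightarrow> Id x 0 = idxd x" using Id_nat[of x 0] by simp

lemma A_pos_mixed: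
  assumes p: "p \<in> {0..<1}" and q: "q \<in> {0<..1}" and ne: "I p \<noteq> Id q" and ag: "\<And>j. 0 \<le> j \<Longrightarrow> I p j = Id q j"
  shows "\<exists>m\<in>{1..n-1}. \<exists>k. I p = shiftk k (I (bt m)) \<and> Id q = shiftk k (Id (bt m))"
proof -
  obtain j0 where j0: "I p j0 \<noteq> Id q j0" using ne by (auto simp: fun_eq_iff)
  have "j0 < 0"
  proof (rule ccontr)
    assume "\<not> j0 < 0" then show False using ag[of j0] j0 by simp
  qed
  then obtain t where "j0 = - int (Suc t)" using neg_idx by blast
  then have ex: "\<exists>t. I p (- int (Suc t)) \<noteq> Id q (- int (Suc t))" using j0 by blast
  define t0 where "t0 = (LEAST t. I p (- int (Suc t)) \<noteq> Id q (- int (Suc t)))"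
  have t0: "I p (- int (Suc t0)) \<noteq> Id q (- int (Suc t0))" unfolding t0_def using ex by (rule LeastI_ex)
  have below: "I p (- int (Suc t)) = Id q (- int (Suc t))" if "t < t0" for t
    using not_less_Least[of t "\<lambda>t. I p (- int (Suc t)) \<noteq> Id q (- int (Suc t))"] that unfolding t0_def by blast
  define r where "r = gp T {0..<1} (- int t0) p"
  define r' where "r' = gp Td {0<..1} (- int t0) q"
  have r: "shiftk (- int t0) (I p) = I r" "r \<in> {0..<1}" using shift_I[OF p] by (auto simp: r_def)
  have r': "shiftk (- int t0) (Id q) = Id r'" "r' \<in> {0<..1}" using shift_Id[OF q] by (auto simp: r'_def)
  have agr: "I r j = Id r' j" if j: "0 \<le> j" for j
  proof -
    have "I r j = I p (j - int t0)" "Id r' j = Id q (j - int t0)" using r(1) r'(1) by (auto simp: shiftk_def fun_eq_iff)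
    moreover have "I p (j - int t0) = Id q (j - int t0)"
    proof (cases "0 \<le> j - int t0")
      case True then show ?thesis using ag by simp
    next
      case False
      define t where "t = nat (int t0 - j) - 1"
      have "j - int t0 = - int (Suc t)" "t < t0" using False j by (auto simp: t_def)
      then show ?thesis using below by simp
    qed
    ultimately show ?thesis by simp
  qed
  have rr: "r = r'" using mixed_fwd_I[OF r(2) r'(2) agr] .
  have "I r (-1) = I p (- int (Suc t0))" "Id r' (-1) = Id q (- int (Suc t0))" using r(1) r'(1) by (auto simp: shiftk_def fun_eq_iff)
  then have "ii r \<noteq> iid r" using t0 I_m1[OF r(2)] Id_m1[OF r'(2)] rr by simp
  then obtain m where m: "m \<in> {1..n-1}" "r = bt m" using ii_ne_iid r(2) r'(2) rr by blast
  have "I p = shiftk (int t0) (I r)" using r(1) shiftk_add[of "int t0" "- int t0" "I p"] by (metis add.right_inverse shiftk_0)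
  moreover have "Id q = shiftk (int t0) (Id r)" using r'(1) rr shiftk_add[of "int t0" "- int t0" "Id q"] by (metis add.right_inverse shiftk_0)
  ultimately show ?thesis using m by blast
qed

lemma A_neg_mixed:
  assumes p: "p \<in> {0..<1}" and q: "q \<in> {0<..1}" and ne: "I p \<noteq> Id q" and ag: "\<And>j. j < 0 \<Longrightarrow> I p j = Id q j"
  shows "\<exists>m\<in>{1..n-1}. \<exists>k. I p = shiftk k (I (b m)) \<and> Id q = shiftk k (Id (b m))"
proof -
  obtain j0 where j0: "I p j0 \<noteq> Id q j0" using ne by (auto simp: fun_eq_iff)
  then have "0 \<le> j0" using ag by force
  then obtain t where "j0 = int t" by (metis nonneg_eq_int)
  then have ex: "\<exists>t. I p (int t) \<noteq> Id q (int t)" using j0 by blast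
  define t0 where "t0 = (LEAST t. I p (int t) \<noteq> Id q (int t))"
  have t0: "I p (int t0) \<noteq> Id q (int t0)" unfolding t0_def using ex by (rule LeastI_ex)
  have below: "I p (int t) = Id q (int t)" if "t < t0" for t
    using not_less_Least[of t "\<lambda>t. I p (int t) \<noteq> Id q (int t)"] that unfolding t0_def by blast
  define r where "r = gp T {0..<1} (int t0) p"
  define r' where "r' = gp Td {0<..1} (int t0) q"
  have r: "shiftk (int t0) (I p) = I r" "r \<in> {0..<1}" using shift_I[OF p] by (auto simp: r_def)
  have r': "shiftk (int t0) (Id q) = Id r'" "r' \<in> {0<..1}" using shift_Id[OF q] by (auto simp: r'_def)
  have agr: "I r j = Id r' j" if j: "j < 0" for j
  proof -
    have "I r j = I p (j + int t0)" "Id r' j = Id q (j + int t0)" using r(1) r'(1) by (auto simp: shiftk_def fun_eq_iff)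
    moreover have "I p (j + int t0) = Id q (j + int t0)"
    proof (cases "j + int t0 < 0")
      case True then show ?thesis using ag by simp
    next
      case False
      define t where "t = nat (j + int t0)"
      have "j + int t0 = int t" "t < t0" using False j by (auto simp: t_def)
      then show ?thesis using below by simp
    qed
    ultimately show ?thesis by simp
  qed
  have rr: "r = r'" using mixed_bwd_I[OF r(2) r'(2) agr] .
  have "I r 0 = I p (int t0)" "Id r' 0 = Id q (int t0)" using fun_cong[OF r(1), of 0] fun_cong[OF r'(1), of 0] by (simp_all add: shiftk_def)
  then have "idx r \<noteq> idxd r" using t0 I_0[OF r(2)] Id_0[OF r'(2)] rr by simp
  then obtain m where m: "m \<in> {1..n-1}" "r = b m" using idx_ne_idxd r(2) r'(2) rr by blast
  have "I p = shiftk (- int t0) (I r)" using r(1) shiftk_add[of "- int t0" "int t0" "I p"] by (metis add.left_inverse shiftk_0)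
  moreover have "Id q = shiftk (- int t0) (Id r)" using r'(1) rr shiftk_add[of "- int t0" "int t0" "Id q"] by (metis add.left_inverse shiftk_0)
  ultimately show ?thesis using m by blast
qed

lemma A_gen:
  assumes ga: "inXf \<alpha>" and gb: "inXf \<beta>" and ne: "\<alpha> \<noteq> \<beta>"
    and injI: "\<And>x y. x \<in> {0..<1} \<Longrightarrow> y \<in> {0..<1} \<Longrightarrow> (\<And>j. P j \<Longrightarrow> I x j = I y j) \<Longrightarrow> x = y"
    and injId: "\<And>x y. x \<in> {0<..1} \<Longrightarrow> y \<in> {0<..1} \<Longrightarrow> (\<And>j. P j \<Longrightarrow> Id x j = Id y j) \<Longrightarrow> x = y"
    and mix: "\<And>x y. x \<in> {0..<1} \<Longrightarrow> y \<in> {0<..1} \<Longrightarrow> I x \<noteq> Id y \<Longrightarrow> (\<And>j. P j \<Longrightarrow> I x j = Id y j) \<Longrightarrow>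
        \<exists>m\<in>{1..n-1}. \<exists>k. I x = shiftk k (I (c m)) \<and> Id y = shiftk k (Id (c m))"
    and ag: "\<And>j. P j \<Longrightarrow> \<alpha> j = \<beta> j"
  shows "\<exists>m\<in>{1..n-1}. \<exists>k. {\<alpha>, \<beta>} = {shiftk k (I (c m)), shiftk k (Id (c m))}"
proof -
  consider (II) x y where "x \<in> {0..<1}" "y \<in> {0..<1}" "\<alpha> = I x" "\<beta> = I y"
    | (DD) x y where "x \<in> {0<..1}" "y \<in> {0<..1}" "\<alpha> = Id x" "\<beta> = Id y"
    | (ID) x y where "x \<in> {0..<1}" "y \<in> {0<..1}" "\<alpha> = I x" "\<beta> = Id y"
    | (DI) x y where "x \<in> {0<..1}" "y \<in> {0..<1}" "\<alpha> = Id x" "\<beta> = I y"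
    using ga gb unfolding inXf_def by blast
  then show ?thesis
  proof cases
    case II
    have "\<And>j. P j \<Longrightarrow> I x j = I y j" using II ag by simp
    then have "x = y" using injI[OF II(1,2)] by blast
    then show ?thesis using II ne by simp
  next
    case DD
    have "\<And>j. P j \<Longrightarrow> Id x j = Id y j" using DD ag by simp
    then have "x = y" using injId[OF DD(1,2)] by blast
    then show ?thesis using DD ne by simp
  next
    case ID
    have h1: "I x \<noteq> Id y" using ID ne by simp
    have h2: "\<And>j. P j \<Longrightarrow> I x j = Id y j" using ID ag by simp
    obtain m k where mk: "m \<in> {1..n-1}" "I x = shiftk k (I (c m))" "Id y = shiftk k (Id (c m))"
      using mix[OF ID(1,2) h1 h2] by blast
    have "{\<alpha>, \<beta>} = {shiftk k (I (c m)), shiftk k (Id (c m))}" using ID mk by simp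
    then show ?thesis using mk(1) by blast
  next
    case DI
    have h1: "I y \<noteq> Id x" using DI ne by simp
    have h2: "\<And>j. P j \<Longrightarrow> I y j = Id x j" using DI ag by simp
    obtain m k where mk: "m \<in> {1..n-1}" "I y = shiftk k (I (c m))" "Id x = shiftk k (Id (c m))"
      using mix[OF DI(2,1) h1 h2] by blast
    have "{\<alpha>, \<beta>} = {shiftk k (I (c m)), shiftk k (Id (c m))}" using DI mk by (simp add: insert_commute)
    then show ?thesis using mk(1) by blast
  qed
qed

lemma pair_shift: "{\<alpha>, \<beta>} = {A, B} \<Longrightarrow> {shiftk c \<alpha>, shiftk c \<beta>} = {shiftk c A, shiftk c B}"
proof -
  assume "{\<alpha>, \<beta>} = {A, B}"
  then have "shiftk c ` {\<alpha>, \<beta>} = shiftk c ` {A, B}" by simp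
  then show ?thesis by simp
qed

lemma shiftk_inv: "shiftk (- c) (shiftk c g) = g" by (simp add: shiftk_add)

lemma pos_thm:
  assumes ga: "inXf \<alpha>" and gb: "inXf \<beta>" and ne: "\<alpha> \<noteq> \<beta>" and pa: "pos_asymp \<alpha> \<beta>"
  shows "\<exists>m\<in>{1..n-1}. \<exists>k. {\<alpha>, \<beta>} = {shiftk k (I (bt m)), shiftk k (Id (bt m))}"
proof -
  obtain N where N: "\<And>i. N \<le> i \<Longrightarrow> \<alpha> i = \<beta> i" using pa unfolding pos_asymp_def by blast
  define M where "M = max N 0"
  have ne': "shiftk M \<alpha> \<noteq> shiftk M \<beta>" using ne shiftk_inv[of M \<alpha>] shiftk_inv[of M \<beta>] by metis
  have ag: "shiftk M \<alpha> j = shiftk M \<beta> j" if "0 \<le> j" for j using N[of "j + M"] that by (simp add: shiftk_def M_def)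
  obtain m k where mk: "m \<in> {1..n-1}" "{shiftk M \<alpha>, shiftk M \<beta>} = {shiftk k (I (bt m)), shiftk k (Id (bt m))}"
    using A_gen[where P="\<lambda>j. 0 \<le> j" and c=bt, OF inXf_shift[OF ga] inXf_shift[OF gb] ne' I_fwd_inj Id_fwd_inj A_pos_mixed ag]
    by blast
  have "{\<alpha>, \<beta>} = {shiftk (- M) (shiftk k (I (bt m))), shiftk (- M) (shiftk k (Id (bt m)))}"
    using pair_shift[OF mk(2), of "- M"] by (simp add: shiftk_inv)
  then show ?thesis using mk(1) by (auto simp: shiftk_add)
qed

lemma neg_thm:
  assumes ga: "inXf \<alpha>" and gb: "inXf \<beta>" and ne: "\<alpha> \<noteq> \<beta>" and pa: "neg_asymp \<alpha> \<beta>"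
  shows "\<exists>m\<in>{1..n-1}. \<exists>k. {\<alpha>, \<beta>} = {shiftk k (I (b m)), shiftk k (Id (b m))}"
proof -
  obtain N where N: "\<And>i. i \<le> - N \<Longrightarrow> \<alpha> i = \<beta> i" using pa unfolding neg_asymp_def by blast
  define M where "M = max N 0"
  have ne': "shiftk (- M) \<alpha> \<noteq> shiftk (- M) \<beta>" using ne shiftk_inv[of "- M" \<alpha>] shiftk_inv[of "- M" \<beta>] by (metis minus_minus)
  have ag: "shiftk (- M) \<alpha> j = shiftk (- M) \<beta> j" if "j < 0" for j using N[of "j - M"] that by (simp add: shiftk_def M_def)
  obtain m k where mk: "m \<in> {1..n-1}" "{shiftk (- M) \<alpha>, shiftk (- M) \<beta>} = {shiftk k (I (b m)), shiftk k (Id (b m))}"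
    using A_gen[where P="\<lambda>j. j < 0" and c=b, OF inXf_shift[OF ga] inXf_shift[OF gb] ne' I_bwd_inj Id_bwd_inj A_neg_mixed ag]
    by blast
  have "{\<alpha>, \<beta>} = {shiftk M (shiftk k (I (b m))), shiftk M (shiftk k (Id (b m)))}"
    using pair_shift[OF mk(2), of "M"] shiftk_inv[of "- M"] by simp
  then show ?thesis using mk(1) by (auto simp: shiftk_add)
qed

lemma pos_conv:
  assumes m: "m \<in> {1..n-1}" and e: "{\<alpha>, \<beta>} = {shiftk k (I (bt m)), shiftk k (Id (bt m))}"
  shows "pos_asymp \<alpha> \<beta>"
proof -
  have "shiftk k (I (bt m)) i = shiftk k (Id (bt m)) i" if "- k \<le> i" for i
    using fwd_bt[OF m, of "i + k"] that by (simp add: shiftk_def)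
  then show ?thesis using e unfolding pos_asymp_def doubleton_eq_iff by (metis)
qed

lemma neg_conv:
  assumes m: "m \<in> {1..n-1}" and e: "{\<alpha>, \<beta>} = {shiftk k (I (b m)), shiftk k (Id (b m))}"
  shows "neg_asymp \<alpha> \<beta>"
proof -
  have "shiftk k (I (b m)) i = shiftk k (Id (b m)) i" if "i \<le> - (k + 1)" for i
    using bwd_b[OF m, of "i + k"] that by (simp add: shiftk_def)
  then show ?thesis using e unfolding neg_asymp_def doubleton_eq_iff by (metis)
qed

end

context iet begin

lemma part3:
  assumes x: "x \<in> {0..<1}" and y: "y \<in> {0<..1}" and e: "I x = Id y"
  shows "x = y \<and> x \<in> iet_R n a \<tau>"
proof -
  have xy: "x = y" using mixed_fwd_I[OF x y] e by simp
  have x2: "x \<in> {0<..1}" using y xy by simp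
  have fs: "(Td^^t) x = (T^^t) x \<and> idxd ((Td^^t) x) = idx ((T^^t) x)" for t
  proof (induction t)
    case 0 then show ?case using I_0[OF x] Id_0[OF x2] e xy by simp
  next
    case (Suc t)
    define q where "q = (T^^t) x"
    have s1: "(Td^^t) x = q" "idxd q = idx q" using Suc by (auto simp: q_def)
    have e1: "(Td^^Suc t) x = (T^^Suc t) x"
    proof -
      have "(Td^^Suc t) x = Td q" using s1 by simp
      also have "\<dots> = q + sh (idx q)" using Td_eq[of q] s1 by simp
      also have "\<dots> = (T^^Suc t) x" using T_eq[of q] by (simp add: q_def)
      finally show ?thesis .
    qed
    have "idxd ((Td^^Suc t) x) = idx ((T^^Suc t) x)" using I_nat[OF x, of "Suc t"] Id_nat[OF x2, of "Suc t"] e xy by simp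
    then show ?case using e1 by simp
  qed
  have bs: "(Tdi^^t) x = (Ti^^t) x \<and> iid ((Tdi^^t) x) = ii ((Ti^^t) x)" for t
  proof (induction t)
    case 0 then show ?case using I_m1[OF x] Id_m1[OF x2] e xy by simp
  next
    case (Suc t)
    define q where "q = (Ti^^t) x"
    have s1: "(Tdi^^t) x = q" "iid q = ii q" using Suc by (auto simp: q_def)
    have e1: "(Tdi^^Suc t) x = (Ti^^Suc t) x"
    proof -
      have "(Tdi^^Suc t) x = Tdi q" using s1 by simp
      also have "\<dots> = q - sh (ii q)" using s1 by (simp add: Tdi_def)
      also have "\<dots> = (Ti^^Suc t) x" by (simp add: q_def Ti_def)
      finally show ?thesis .
    qed
    have "iid ((Tdi^^Suc t) x) = ii ((Ti^^Suc t) x)" using I_neg[OF x, of "Suc t"] Id_neg[OF x2, of "Suc t"] e xy by simp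
    then show ?case using e1 by simp
  qed
  have notorb: "x \<notin> gp T {0..<1} k ` D" for k
  proof
    assume "x \<in> gp T {0..<1} k ` D"
    then obtain d where d: "d \<in> D" "x = gp T {0..<1} k d" by blast
    have dA: "d \<in> {0..<1}" using D_in[OF d(1)] by auto
    have dd: "d = gp T {0..<1} (- k) x" using gp_add[OF T_bij dA, of "- k" k] d(2) by simp
    show False
    proof (cases "0 \<le> - k")
      case True
      then obtain t where t: "- k = int t" by (metis nonneg_eq_int)
      have d1: "d = (T^^t) x" using dd t by (simp add: gp_nat)
      have h1: "(Td^^t) x = (T^^t) x" and h2: "idxd ((Td^^t) x) = idx ((T^^t) x)" using fs[of t] by auto
      have "d \<in> {0<..1}" using Tdpow_in[OF x2, of t] d1 h1 by simp
      moreover have "idx d = idxd d" using h2[unfolded h1] d1 by simp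
      ultimately show False using b_notD[OF dA] d(1) by simp
    next
      case False
      then have "- k < 0" by simp
      then obtain t where t: "- k = - int (Suc t)" using neg_idx by blast
      have "d = gp T {0..<1} (- int (Suc t)) x" using dd[unfolded t] .
      also have "\<dots> = (inv_into {0..<1} T ^^ Suc t) x" by (simp only: gp_neg)
      also have "\<dots> = (Ti^^Suc t) x" using invpow[OF x, of "Suc t"] .
      finally have d1: "d = (Ti^^Suc t) x" .
      define q where "q = (Ti^^t) x"
      have bt1: "(Tdi^^t) x = (Ti^^t) x" using bs[of t] by blast
      have q: "q \<in> {0..<1}" "q \<in> {0<..1}" unfolding q_def using Tipow_in[OF x, of t] Tdipow_in[OF x2, of t] bt1 by auto
      have qi: "iid q = ii q" "Tdi q = Ti q" using bs[of t] by (auto simp: q_def Ti_def Tdi_def)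
      have dq: "d = Ti q" using d1 by (simp add: q_def)
      have "idx d = ii q" using Ti_piece[of q] q dq by simp
      moreover have "idxd d = iid q" using Tdi_piece[of q] q dq qi by simp
      moreover have "d \<in> {0<..1}" using Tdi_in[OF q(2)] dq qi by simp
      ultimately show False using b_notD[OF dA] d(1) qi by simp
    qed
  qed
  have "x \<in> iet_R n a \<tau>"
    unfolding iet_R_def iet_Dinf_def Tpow_gp using x x2 notorb by auto
  then show ?thesis using xy by simp
qed

lemma fs_contra:
  assumes m: "m \<in> {1..n-1}" and fsp: "fully_split_perm n \<tau>" and ag: "\<And>j. j \<le> - N \<Longrightarrow> I (bt m) j = Id (bt m) j"
  shows False
proof -
  define x where "x = bt m"
  have mm: "m \<in> {1..n}" "m < n" "m + 1 \<in> {1..n}" using m n2 by auto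
  have x: "x \<in> {0..<1}" "x \<in> {0<..1}" using bt_pos[OF mm(1)] bt_lt[OF mm(2) order_refl] btn by (auto simp: x_def)
  define i where "i = inv \<tau> (m+1)"
  define i' where "i' = inv \<tau> m"
  have i: "i \<in> {1..n}" "\<tau> i = m + 1" using invtau_in[OF mm(3)] by (auto simp: i_def)
  have i': "i' \<in> {1..n}" "\<tau> i' = m" using invtau_in[OF mm(1)] by (auto simp: i'_def)
  have "idxt x = m + 1" using idxt_eq[OF mm(3)] bt_lt[of m "m+1"] mm by (simp add: x_def)
  then have iix: "ii x = i" by (simp add: ii_def i_def)
  have u: "Ti x = b (i - 1)" using iix i by (simp add: Ti_def sh_def x_def)
  have "idxtd x = m" using idxtd_eq[OF mm(1)] bt_lt[of "m-1" m] mm by (simp add: x_def)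
  then have iidx: "iid x = i'" by (simp add: iid_def i'_def)
  have v: "Tdi x = b i'"
  proof -
    have "Tdi x = bt m - (bt (m - 1) - b (i' - 1))" using iidx i' by (simp add: Tdi_def sh_def x_def)
    also have "\<dots> = b i'" using btlen[OF i'(1)] blen[OF i'(1)] i' by simp
    finally show ?thesis .
  qed
  have split: "split_perm n \<tau>" using fsp by (simp add: fully_split_perm_def)
  have ne: "i - 1 \<noteq> i'"
  proof
    assume h: "i - 1 = i'"
    then have "i' \<in> {1..n-1}" "i' + 1 = i" using i i' by auto
    then have "\<tau> (i' + 1) = \<tau> i' + 1" using i i' by simp
    then show False using split \<open>i' \<in> {1..n-1}\<close> unfolding split_perm_def by blast
  qed
  define u where "u = b (i - 1)"
  define v where "v = b i'"
  have "i - 1 \<le> n" "i' \<le> n" using i i' by auto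
  then have uv: "u \<noteq> v" using b_inj[of "i-1" i'] ne by (auto simp: u_def v_def)
  have uA: "u \<in> {0..<1}" using Ti_in[OF x(1)] u by (simp add: u_def)
  have vB: "v \<in> {0<..1}" using Tdi_in[OF x(2)] v by (simp add: v_def)
  define M where "M = nat N"
  define w where "w = (Ti^^M) u"
  define w' where "w' = (Tdi^^M) v"
  have wA: "w \<in> {0..<1}" using Tipow_in[OF uA] by (simp add: w_def)
  have wB: "w' \<in> {0<..1}" using Tdipow_in[OF vB] by (simp add: w'_def)
  have agw: "ii ((Ti^^t) w) = iid ((Tdi^^t) w')" for t
  proof -
    define s where "s = Suc (t + M)"
    have A: "(Ti^^t) w = (Ti^^s) x" using u by (simp add: s_def w_def u_def funpow_add funpow_Suc_right del: funpow.simps)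
    have B: "(Tdi^^t) w' = (Tdi^^s) x" using v by (simp add: s_def w'_def v_def funpow_add funpow_Suc_right del: funpow.simps)
    have C: "I x (- int (Suc s)) = ii ((Ti^^s) x)" using I_neg[OF x(1), of s] .
    have D: "Id x (- int (Suc s)) = iid ((Tdi^^s) x)" using Id_neg[OF x(2), of s] .
    have le: "- int (Suc s) \<le> - N" by (simp add: s_def M_def)
    have E: "I x (- int (Suc s)) = Id x (- int (Suc s))" using ag[OF le] by (simp add: x_def)
    have "ii ((Ti^^t) w) = ii ((Ti^^s) x)" using A by simp
    also have "\<dots> = iid ((Tdi^^s) x)" using C D E by simp
    also have "\<dots> = iid ((Tdi^^t) w')" using B by simp
    finally show ?thesis .
  qed
  have ww: "w = w'" using mixed_bwd[OF wA wB agw] .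
  have Tw: "(T^^M) w = u" using T_Tipow[OF uA] by (simp add: w_def)
  have Tdw: "(Td^^M) w = v" using Td_Tdipow[OF vB] ww by (simp add: w'_def)
  have wB': "w \<in> {0<..1}" using wB ww by simp
  have ex: "\<exists>j. (T^^j) w \<noteq> (Td^^j) w" using Tw Tdw uv by metis
  define j0 where "j0 = (LEAST j. (T^^j) w \<noteq> (Td^^j) w)"
  have j0: "(T^^j0) w \<noteq> (Td^^j0) w" unfolding j0_def using ex by (rule LeastI_ex)
  have j0M: "j0 \<le> M" unfolding j0_def using Tw Tdw uv by (intro Least_le) simp
  have j00: "j0 \<noteq> 0"
  proof
    assume "j0 = 0" then show False using j0 by simp
  qed
  define c where "c = (T^^(j0-1)) w"
  have cd: "(Td^^(j0-1)) w = c"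
    using not_less_Least[of "j0 - 1" "\<lambda>j. (T^^j) w \<noteq> (Td^^j) w"] j00 unfolding c_def j0_def by auto
  have cA: "c \<in> {0..<1}" using Tpow_in[OF wA] by (simp add: c_def)
  have cB: "c \<in> {0<..1}" using Tdpow_in[OF wB'] cd by metis
  have jj: "j0 = Suc (j0 - 1)" using j00 by simp
  have Tc: "(T^^j0) w = T c" by (subst jj) (simp add: c_def)
  have Tdc: "(Td^^j0) w = Td c" by (subst jj) (simp only: funpow.simps(2) o_apply cd)
  have "idx c \<noteq> idxd c" using j0 Tc Tdc T_eq[of c] Td_eq[of c] by auto
  then obtain e where e: "e \<in> {1..n-1}" "c = b e" using idx_ne_idxd[OF cA cB] by blast
  have cD: "c \<in> D" using e by (auto simp: D_def')
  define K where "K = M - (j0 - 1)"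
  have K1: "1 \<le> K" using j0M j00 by (simp add: K_def)
  have uK: "u = (T^^K) c"
  proof -
    have "M = K + (j0 - 1)" using j0M j00 by (simp add: K_def)
    then have "(T^^M) w = (T^^K) c" by (simp add: c_def funpow_add)
    then show ?thesis using Tw by simp
  qed
  show False
  proof (cases "i = 1")
    case False
    then have "i - 1 \<in> {1..n-1}" using i by auto
    then have "u \<in> D" by (auto simp: u_def D_def')
    then show False using keaneD[OF cD K1] uK by simp
  next
    case True
    then have u0: "u = 0" by (simp add: u_def)
    have "K = 1"
    proof (rule ccontr)
      assume "K \<noteq> 1" then have "2 \<le> K" using K1 by simp
      then show False using orb0[OF cD] uK u0 by simp
    qed
    then have Tc0: "T c = 0" using uK u0 by simp
    have MJ: "M = j0" using \<open>K = 1\<close> j0M j00 by (simp add: K_def)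
    have vc: "v = Td c" using Tdw Tdc MJ by simp
    have ee: "e + 1 \<in> {1..n}" "e \<in> {1..n}" using e by auto
    have "T c = bt (\<tau> (e+1) - 1)" using T_b[OF ee(1)] e by simp
    then have "bt (\<tau> (e+1) - 1) = bt 0" using Tc0 by simp
    then have "\<tau> (e+1) - 1 = 0" using bt_inj[of "\<tau> (e+1) - 1" 0] tau_in[OF ee(1)] by auto
    moreover have "1 \<le> \<tau> (e+1)" using tau_in[OF ee(1)] by simp
    ultimately have t1: "\<tau> (e+1) = 1" by linarith
    have vbt: "v = bt (\<tau> e)" using vc Td_b[OF ee(2)] e by simp
    show False
    proof (cases "i' = n")
      case True
      then have "bt (\<tau> e) = bt n" using vbt btn bn by (simp add: v_def)
      then have "\<tau> e = n" using bt_inj[of "\<tau> e" n] tau_in[OF ee(2)] by auto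
      then have "inv \<tau> n = e" "inv \<tau> 1 = e + 1" using t1 permutes_inv_eq[OF perm] by auto
      then show False using fsp by (simp add: fully_split_perm_def)
    next
      case False
      then have vD: "v \<in> D" using i' by (auto simp: v_def D_def')
      have "\<tau> e \<noteq> n"
      proof
        assume "\<tau> e = n" then have "v = 1" using vbt btn by simp
        then show False using D_in[OF vD] by simp
      qed
      then have "\<tau> e \<in> {1..n-1}" using tau_in[OF ee(2)] by auto
      then obtain d e2 where de: "d \<in> D" "1 \<le> e2" "bt (\<tau> e) = (T^^e2) d" using btm_orbit by blast
      then show False using keaneD[OF de(1) de(2)] vD vbt by simp
    qed
  qed
qed

lemma notsplit_pair:
  assumes ns: "\<not> split_perm n \<tau>"
  shows "\<exists>j\<in>{1..n-1}. I (b j) \<noteq> Id (b j) \<and> doubly_asymp (I (b j)) (Id (b j))"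
proof -
  obtain j where j: "j \<in> {1..n-1}" "\<tau> (j+1) = \<tau> j + 1" using ns unfolding split_perm_def by blast
  define x where "x = b j"
  have jj: "0 < j" "j \<le> n" "j < n" "j + 1 \<in> {1..n}" "j \<in> {1..n}" using j n2 by auto
  have x: "x \<in> {0..<1}" "x \<in> {0<..1}" "x \<in> D" using j b_lt[OF jj(1,2)] b_lt[OF jj(3) order_refl] bn by (auto simp: x_def D_def')
  have "idx x = j + 1" using T_b[OF jj(4)] by (simp add: x_def)
  moreover have "idxd x = j" using Td_b[OF jj(5)] by (simp add: x_def)
  ultimately have ne: "I x \<noteq> Id x" using I_0[OF x(1)] Id_0[OF x(2)] by (metis n_not_Suc_n Suc_eq_plus1)
  have neg: "neg_asymp (I x) (Id x)" unfolding neg_asymp_def using bwd_b[OF j(1)] by (intro exI[of _ 1]) (auto simp: x_def)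
  define y where "y = T x"
  have y1: "y = bt (\<tau> j)" using T_b[OF jj(4)] j by (simp add: y_def x_def)
  have y2: "Td x = y" using Td_b[OF jj(5)] y1 by (simp add: x_def)
  have yA: "y \<in> {0..<1}" using T_in[OF x(1)] by (simp add: y_def)
  have py: "(T^^k) y = (T^^(Suc k)) x" for k by (simp add: y_def funpow_Suc_right del: funpow.simps)
  have nD: "(T^^k) y \<notin> D" for k using keaneD[OF x(3), of "Suc k"] py[of k] by auto
  have n0: "(T^^k) y \<noteq> 0" for k
  proof (cases k)
    case 0 then show ?thesis using y1 bt_pos[OF tau_in[OF jj(5)]] by simp
  next
    case (Suc k') then show ?thesis using orb0[OF x(3), of "Suc k"] py[of k] by simp
  qed
  have pos: "pos_asymp (I x) (Id x)" unfolding pos_asymp_def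
  proof (intro exI[of _ 1] allI impI)
    fix i :: int assume i: "1 \<le> i"
    then obtain k where k: "i = int (Suc k)" by (metis nat_int less_le_trans zero_less_one nat_0_le int_ops(4) Suc_pred' order_less_le nat_less_iff zero_less_nat_eq)
    have g0: "(Td^^k) y = (T^^k) y \<and> idxd ((Td^^k) y) = idx ((T^^k) y)" using good_fwd[OF yA nD n0] .
    have g: "idxd ((Td^^k) y) = idx ((T^^k) y)" using g0 by blast
    have "I x i = idx ((T^^k) y)" using I_nat[OF x(1), of "Suc k"] k py by simp
    moreover have "Id x i = idxd ((Td^^k) y)" using Id_nat[OF x(2), of "Suc k"] k y2
      by (simp add: funpow_Suc_right del: funpow.simps)
    ultimately show "I x i = Id x i" using g by simp
  qed
  show ?thesis using j(1) ne neg pos by (auto simp: doubly_asymp_def x_def)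
qed

end


lemma tendsto_fun_iff: "((f::'x \<Rightarrow> 'i \<Rightarrow> 'b::topological_space) \<longlongrightarrow> l) F \<longleftrightarrow> (\<forall>i. ((\<lambda>c. f c i) \<longlongrightarrow> l i) F)"
  using limitin_componentwise[of "\<lambda>i. euclidean" UNIV f l F] by (simp add: euclidean_product_topology)
lemma tendsto_nat_iff: "((g::'x\<Rightarrow>nat) \<longlongrightarrow> c) F \<longleftrightarrow> eventually (\<lambda>x. g x = c) F"
proof
  assume "(g \<longlongrightarrow> c) F" then show "eventually (\<lambda>x. g x = c) F"
    using topological_tendstoD[of g c F "{c}"] by (simp add: open_discrete)
next
  assume "eventually (\<lambda>x. g x = c) F" then show "(g \<longlongrightarrow> c) F"
    by (simp add: tendsto_eventually)
qed
lemma tendsto_itin_iff: "((f::'x \<Rightarrow> int \<Rightarrow> nat) \<longlongrightarrow> l) F \<longleftrightarrow> (\<forall>i. eventually (\<lambda>c. f c i = l i) F)"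
  by (simp add: tendsto_fun_iff tendsto_nat_iff)

context iet begin

abbreviation R where "R \<equiv> iet_R n a \<tau>"
abbreviation X where "X \<equiv> iet_X n a \<tau>"

lemma R_sub: "z \<in> R \<Longrightarrow> 0 < z \<and> z < 1"
  unfolding iet_R_def iet_Dinf_def by auto

lemma R_dense: assumes cd: "c < d" "0 \<le> c" "d \<le> 1" shows "\<exists>z\<in>R. c < z \<and> z < d"
proof (rule ccontr)
  assume "\<not> ?thesis"
  then have sub: "{c<..<d} \<subseteq> iet_Dinf n a \<tau>" using cd unfolding iet_R_def by auto
  have fD: "finite D" by (simp add: D_def')
  have "countable (iet_Dinf n a \<tau>)" unfolding iet_Dinf_def
    using fD by (intro countable_Un countable_UN) (auto intro: countable_finite)
  then have "countable {c<..<d}" using sub countable_subset by blast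
  then show False using uncountable_open_interval[of c d] cd by simp
qed

lemma approx_I_left:
  assumes x: "x \<in> {0<..1}"
  shows "\<exists>\<delta>>0. \<forall>z. x - \<delta> < z \<longrightarrow> z < x \<longrightarrow> I z j = Id x j"
proof (cases "0 \<le> j")
  case True
  then obtain t where t: "j = int t" by (metis nonneg_eq_int)
  obtain \<delta> where d: "\<delta> > 0" "\<forall>e\<in>{-\<delta><..<0}. \<forall>j\<le>t. (T^^j) (x+e) = (Td^^j) x + e \<and> (T^^j) (x+e) \<in> {0..<1} \<and> idx ((T^^j) (x+e)) = idxd ((Td^^j) x)"
    using approx_T_Td[OF x, of t] by blast
  have "I z j = Id x j" if z: "x - \<delta> < z" "z < x" for z
  proof -
    have e: "z - x \<in> {-\<delta><..<0}" using z by simp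
    have ze: "x + (z - x) = z" by simp
    note P = bspec[OF d(2) e, unfolded ze]
    have zA: "z \<in> {0..<1}" using P[rule_format, of 0] by simp
    have "idx ((T^^t) z) = idxd ((Td^^t) x)" using P[rule_format, OF order_refl] by blast
    then show ?thesis using I_nat[OF zA, of t] Id_nat[OF x, of t] t by simp
  qed
  then show ?thesis using d(1) by blast
next
  case False
  then obtain t where t: "j = - int (Suc t)" using neg_idx by force
  obtain \<delta> where d: "\<delta> > 0" "\<forall>e\<in>{-\<delta><..<0}. \<forall>j\<le>t. (Ti^^j) (x+e) = (Tdi^^j) x + e \<and> (Ti^^j) (x+e) \<in> {0..<1} \<and> ii ((Ti^^j) (x+e)) = iid ((Tdi^^j) x)"
    using approx_Ti_Tdi[OF x, of t] by blast
  have "I z j = Id x j" if z: "x - \<delta> < z" "z < x" for z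
  proof -
    have e: "z - x \<in> {-\<delta><..<0}" using z by simp
    have ze: "x + (z - x) = z" by simp
    note P = bspec[OF d(2) e, unfolded ze]
    have zA: "z \<in> {0..<1}" using P[rule_format, of 0] by simp
    have "ii ((Ti^^t) z) = iid ((Tdi^^t) x)" using P[rule_format, OF order_refl] by blast
    then show ?thesis using I_neg[OF zA, of t] Id_neg[OF x, of t] t by simp
  qed
  then show ?thesis using d(1) by blast
qed

lemma approx_I_right:
  assumes x: "x \<in> {0..<1}"
  shows "\<exists>\<delta>>0. \<forall>z. x \<le> z \<longrightarrow> z < x + \<delta> \<longrightarrow> I z j = I x j"
proof (cases "0 \<le> j")
  case True
  then obtain t where t: "j = int t" by (metis nonneg_eq_int)
  obtain \<delta> where d: "\<delta> > 0" "\<forall>e\<in>{0..<\<delta>}. \<forall>j\<le>t. (T^^j) (x+e) = (T^^j) x + e \<and> (T^^j) (x+e) \<in> {0..<1} \<and> idx ((T^^j) (x+e)) = idx ((T^^j) x)"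
    using approx_T_T[OF x, of t] by blast
  have "I z j = I x j" if z: "x \<le> z" "z < x + \<delta>" for z
  proof -
    have e: "z - x \<in> {0..<\<delta>}" using z by simp
    have ze: "x + (z - x) = z" by simp
    note P = bspec[OF d(2) e, unfolded ze]
    have zA: "z \<in> {0..<1}" using P[rule_format, of 0] by simp
    have "idx ((T^^t) z) = idx ((T^^t) x)" using P[rule_format, OF order_refl] by blast
    then show ?thesis using I_nat[OF zA, of t] I_nat[OF x, of t] t by simp
  qed
  then show ?thesis using d(1) by blast
next
  case False
  then obtain t where t: "j = - int (Suc t)" using neg_idx by force
  obtain \<delta> where d: "\<delta> > 0" "\<forall>e\<in>{0..<\<delta>}. \<forall>j\<le>t. (Ti^^j) (x+e) = (Ti^^j) x + e \<and> (Ti^^j) (x+e) \<in> {0..<1} \<and> ii ((Ti^^j) (x+e)) = ii ((Ti^^j) x)"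
    using approx_Ti_Ti[OF x, of t] by blast
  have "I z j = I x j" if z: "x \<le> z" "z < x + \<delta>" for z
  proof -
    have e: "z - x \<in> {0..<\<delta>}" using z by simp
    have ze: "x + (z - x) = z" by simp
    note P = bspec[OF d(2) e, unfolded ze]
    have zA: "z \<in> {0..<1}" using P[rule_format, of 0] by simp
    have "ii ((Ti^^t) z) = ii ((Ti^^t) x)" using P[rule_format, OF order_refl] by blast
    then show ?thesis using I_neg[OF zA, of t] I_neg[OF x, of t] t by simp
  qed
  then show ?thesis using d(1) by blast
qed

lemma ev_small: "0 < \<delta> \<Longrightarrow> eventually (\<lambda>k. inverse (real (Suc k)) < \<delta>) sequentially"
proof -
  assume "0 < \<delta>"
  then obtain N where N: "inverse (real (Suc N)) < \<delta>" using reals_Archimedean by blast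
  have "inverse (real (Suc k)) < \<delta>" if "N \<le> k" for k
  proof -
    have le: "real (Suc N) \<le> real (Suc k)" using that by simp
    have "inverse (real (Suc k)) \<le> inverse (real (Suc N))" by (rule le_imp_inverse_le[OF le]) simp
    then show ?thesis using N by linarith
  qed
  then show ?thesis unfolding eventually_sequentially by blast
qed

lemma Xin_I: assumes x: "x \<in> {0..<1}" shows "I x \<in> X"
proof -
  have "\<forall>k. \<exists>z. z \<in> R \<and> x < z \<and> z < min (x + inverse (real (Suc k))) 1"
  proof
    fix k
    have "x < min (x + inverse (real (Suc k))) 1" using x by simp
    then show "\<exists>z. z \<in> R \<and> x < z \<and> z < min (x + inverse (real (Suc k))) 1"
      using R_dense[of x "min (x + inverse (real (Suc k))) 1"] x by auto
  qed
  then obtain z where z: "\<And>k. z k \<in> R" "\<And>k. x < z k" "\<And>k. z k < x + inverse (real (Suc k))"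
    by (metis min_less_iff_conj)
  have lim: "((\<lambda>k. I (z k)) \<longlongrightarrow> I x) sequentially"
    unfolding tendsto_itin_iff
  proof
    fix j
    obtain \<delta> where d: "\<delta> > 0" "\<And>w. x \<le> w \<Longrightarrow> w < x + \<delta> \<Longrightarrow> I w j = I x j" using approx_I_right[OF x, of j] by blast
    show "eventually (\<lambda>k. I (z k) j = I x j) sequentially"
      using ev_small[OF d(1)] by eventually_elim (use z d in \<open>smt (verit)\<close>)
  qed
  have mem: "\<forall>k. I (z k) \<in> I ` R" using z(1) by blast
  show ?thesis unfolding iet_X_def closure_sequential
    by (rule exI[of _ "\<lambda>k. I (z k)"]) (rule conjI[OF mem lim])
qed

lemma Xin_Id: assumes x: "x \<in> {0<..1}" shows "Id x \<in> X"
proof -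
  have "\<forall>k. \<exists>z. z \<in> R \<and> max (x - inverse (real (Suc k))) 0 < z \<and> z < x"
  proof
    fix k
    have "max (x - inverse (real (Suc k))) 0 < x" using x by simp
    then show "\<exists>z. z \<in> R \<and> max (x - inverse (real (Suc k))) 0 < z \<and> z < x"
      using R_dense[of "max (x - inverse (real (Suc k))) 0" x] x by auto
  qed
  then obtain z where z: "\<And>k. z k \<in> R" "\<And>k. z k < x" "\<And>k. x - inverse (real (Suc k)) < z k"
    by (metis max_less_iff_conj)
  have lim: "((\<lambda>k. I (z k)) \<longlongrightarrow> Id x) sequentially"
    unfolding tendsto_itin_iff
  proof
    fix j
    obtain \<delta> where d: "\<delta> > 0" "\<And>w. x - \<delta> < w \<Longrightarrow> w < x \<Longrightarrow> I w j = Id x j" using approx_I_left[OF x, of j] by blast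
    show "eventually (\<lambda>k. I (z k) j = Id x j) sequentially"
      using ev_small[OF d(1)] by eventually_elim (use z d in \<open>smt (verit)\<close>)
  qed
  have mem: "\<forall>k. I (z k) \<in> I ` R" using z(1) by blast
  show ?thesis unfolding iet_X_def closure_sequential
    by (rule exI[of _ "\<lambda>k. I (z k)"]) (rule conjI[OF mem lim])
qed

end

context iet begin

lemma ev_const: "eventually (\<lambda>k. P) sequentially \<Longrightarrow> P"
  unfolding eventually_sequentially by blast

lemma Xchar: assumes al: "\<alpha> \<in> X" shows "inXf \<alpha>"
proof -
  obtain xs where xs: "\<And>k. xs k \<in> I ` R" "(xs \<longlongrightarrow> \<alpha>) sequentially"
    using al unfolding iet_X_def closure_sequential by blast
  have "\<forall>k. \<exists>z. z \<in> R \<and> xs k = I z" using xs(1) by blast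
  then obtain z where z: "\<And>k. z k \<in> R" "\<And>k. xs k = I (z k)" by metis
  have ev: "eventually (\<lambda>k. I (z k) j = \<alpha> j) sequentially" for j
    using xs(2) unfolding tendsto_itin_iff z(2) by blast
  obtain r where r: "strict_mono r" "monoseq (\<lambda>k. z (r k))" using seq_monosub by blast
  define y where "y k = z (r k)" for k
  have y01: "0 < y k" "y k < 1" for k using R_sub[OF z(1)[of "r k"]] by (auto simp: y_def)
  have evy: "eventually (\<lambda>k. I (y k) j = \<alpha> j) sequentially" for j
    using eventually_subseq[OF r(1) ev[of j]] by (simp add: y_def)
  have "Bseq y" by (rule BseqI'[of _ 1]) (use y01 in \<open>auto simp: less_imp_le\<close>)
  moreover have yy: "y = (\<lambda>k. z (r k))" by (rule ext) (simp add: y_def)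
  then have my: "monoseq y" using r(2) by simp
  ultimately have "convergent y" using Bseq_monoseq_convergent by blast
  then obtain x where lim: "y \<longlonglongrightarrow> x" unfolding convergent_def by blast
  have yR: "y k \<in> R" for k using z(1) by (simp add: y_def)
  show ?thesis
  proof (cases "\<exists>k0. y k0 = x")
    case True
    then obtain k0 where k0: "y k0 = x" by blast
    have mono_case: "\<forall>k\<ge>k0. y k = x"
    proof (cases "incseq y")
      case True
      have "y k \<le> x" for k using incseq_le[OF True lim] .
      moreover have "y k0 \<le> y k" if "k0 \<le> k" for k using True that by (simp add: incseq_def)
      ultimately show ?thesis using k0 by (metis order.antisym)
    next
      case False
      then have dec: "decseq y" using my monoseq_iff by blast
      have "x \<le> y k" for k using decseq_ge[OF dec lim] .
      moreover have "y k \<le> y k0" if "k0 \<le> k" for k using dec that by (simp add: decseq_def)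
      ultimately show ?thesis using k0 by (metis order.antisym)
    qed
    have xR: "x \<in> R" using yR[of k0] k0 by simp
    have xA: "x \<in> {0..<1}" using R_sub[OF xR] by simp
    have "I x j = \<alpha> j" for j
    proof -
      have "eventually (\<lambda>k. y k = x) sequentially" using mono_case unfolding eventually_sequentially by blast
      then have "eventually (\<lambda>k. I x j = \<alpha> j) sequentially" using evy[of j] by eventually_elim simp
      then show ?thesis by (rule ev_const)
    qed
    then have "\<alpha> = I x" by auto
    then show ?thesis using xA unfolding inXf_def by blast
  next
    case False
    then have nex: "\<And>k. y k \<noteq> x" by blast
    show ?thesis
    proof (cases "incseq y")
      case True
      have lt: "y k < x" for k using incseq_le[OF True lim, of k] nex[of k] by simp
      have x0: "0 < x" using lt[of 0] y01[of 0] by simp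
      have x1: "x \<le> 1" using LIMSEQ_le_const2[OF lim] y01 by (meson less_imp_le)
      have xB: "x \<in> {0<..1}" using x0 x1 by simp
      have "Id x j = \<alpha> j" for j
      proof -
        obtain \<delta> where d: "\<delta> > 0" "\<And>w. x - \<delta> < w \<Longrightarrow> w < x \<Longrightarrow> I w j = Id x j" using approx_I_left[OF xB, of j] by blast
        have "eventually (\<lambda>k. x - \<delta> < y k) sequentially" using order_tendstoD(1)[OF lim, of "x - \<delta>"] d(1) by simp
        then have "eventually (\<lambda>k. Id x j = \<alpha> j) sequentially" using evy[of j]
          by eventually_elim (use d(2) lt in metis)
        then show ?thesis by (rule ev_const)
      qed
      then have "\<alpha> = Id x" by auto
      then show ?thesis using xB unfolding inXf_def by blast
    next
      case False
      then have dec: "decseq y" using my monoseq_iff by blast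
      have gt: "x < y k" for k using decseq_ge[OF dec lim, of k] nex[of k] by simp
      have x1: "x < 1" using gt[of 0] y01[of 0] by simp
      have x0: "0 \<le> x" using LIMSEQ_le_const[OF lim] y01 by (meson less_imp_le)
      have xA: "x \<in> {0..<1}" using x0 x1 by simp
      have "I x j = \<alpha> j" for j
      proof -
        obtain \<delta> where d: "\<delta> > 0" "\<And>w. x \<le> w \<Longrightarrow> w < x + \<delta> \<Longrightarrow> I w j = I x j" using approx_I_right[OF xA, of j] by blast
        have "eventually (\<lambda>k. y k < x + \<delta>) sequentially" using order_tendstoD(2)[OF lim, of "x + \<delta>"] d(1) by simp
        then have "eventually (\<lambda>k. I x j = \<alpha> j) sequentially" using evy[of j]
          by eventually_elim (use d(2) gt in \<open>metis less_imp_le\<close>)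
        then show ?thesis by (rule ev_const)
      qed
      then have "\<alpha> = I x" by auto
      then show ?thesis using xA unfolding inXf_def by blast
    qed
  qed
qed

end

context iet begin

lemma main:
  shows
    "(\<forall>\<alpha>\<in>iet_X n a \<tau>. \<forall>\<beta>\<in>iet_X n a \<tau>. \<alpha> \<noteq> \<beta> \<longrightarrow>
        (pos_asymp \<alpha> \<beta> \<longleftrightarrow>
          (\<exists>i\<in>{1..n-1}. \<exists>k::int. let x = iet_btau a \<tau> i in
             {\<alpha>, \<beta>} = {shiftk k (itin n a \<tau> x), shiftk k (itin_d n a \<tau> x)})))
   \<and> (\<forall>\<alpha>\<in>iet_X n a \<tau>. \<forall>\<beta>\<in>iet_X n a \<tau>. \<alpha> \<noteq> \<beta> \<longrightarrow>
        (neg_asymp \<alpha> \<beta> \<longleftrightarrow>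
          (\<exists>i\<in>{1..n-1}. \<exists>k::int. let x = iet_b a i in
             {\<alpha>, \<beta>} = {shiftk k (itin n a \<tau> x), shiftk k (itin_d n a \<tau> x)})))
   \<and> (\<forall>x\<in>{0..<1}. \<forall>y\<in>{0<..1}. itin n a \<tau> x = itin_d n a \<tau> y \<longrightarrow>
        x = y \<and> x \<in> iet_R n a \<tau>)
   \<and> (fully_split_perm n \<tau> \<longrightarrow>
        (\<forall>\<alpha>\<in>iet_X n a \<tau>. \<forall>\<beta>\<in>iet_X n a \<tau>. doubly_asymp \<alpha> \<beta> \<longrightarrow> \<alpha> = \<beta>))
   \<and> (\<not> split_perm n \<tau> \<longrightarrow>
        (\<exists>\<alpha>\<in>iet_X n a \<tau>. \<exists>\<beta>\<in>iet_X n a \<tau>. \<alpha> \<noteq> \<beta> \<and> doubly_asymp \<alpha> \<beta>))"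
proof (intro conjI)
  show "\<forall>\<alpha>\<in>X. \<forall>\<beta>\<in>X. \<alpha> \<noteq> \<beta> \<longrightarrow> (pos_asymp \<alpha> \<beta> \<longleftrightarrow>
          (\<exists>i\<in>{1..n-1}. \<exists>k::int. let x = bt i in {\<alpha>, \<beta>} = {shiftk k (I x), shiftk k (Id x)}))"
  proof (intro ballI impI iffI)
    fix \<alpha> \<beta> assume a: "\<alpha> \<in> X" and b: "\<beta> \<in> X" and ne: "\<alpha> \<noteq> \<beta>"
    {
      assume "pos_asymp \<alpha> \<beta>"
      then show "\<exists>i\<in>{1..n-1}. \<exists>k::int. let x = bt i in {\<alpha>, \<beta>} = {shiftk k (I x), shiftk k (Id x)}"
        using pos_thm[OF Xchar[OF a] Xchar[OF b] ne] by (simp add: Let_def)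
    }
    {
      assume "\<exists>i\<in>{1..n-1}. \<exists>k::int. let x = bt i in {\<alpha>, \<beta>} = {shiftk k (I x), shiftk k (Id x)}"
      then obtain i k where "i \<in> {1..n-1}" "{\<alpha>, \<beta>} = {shiftk k (I (bt i)), shiftk k (Id (bt i))}" by (auto simp: Let_def)
      then show "pos_asymp \<alpha> \<beta>" by (rule pos_conv)
    }
  qed
  show "\<forall>\<alpha>\<in>X. \<forall>\<beta>\<in>X. \<alpha> \<noteq> \<beta> \<longrightarrow> (neg_asymp \<alpha> \<beta> \<longleftrightarrow>
          (\<exists>i\<in>{1..n-1}. \<exists>k::int. let x = b i in {\<alpha>, \<beta>} = {shiftk k (I x), shiftk k (Id x)}))"
  proof (intro ballI impI iffI)
    fix \<alpha> \<beta> assume a: "\<alpha> \<in> X" and b: "\<beta> \<in> X" and ne: "\<alpha> \<noteq> \<beta>"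
    {
      assume "neg_asymp \<alpha> \<beta>"
      then show "\<exists>i\<in>{1..n-1}. \<exists>k::int. let x = b i in {\<alpha>, \<beta>} = {shiftk k (I x), shiftk k (Id x)}"
        using neg_thm[OF Xchar[OF a] Xchar[OF b] ne] by (simp add: Let_def)
    }
    {
      assume "\<exists>i\<in>{1..n-1}. \<exists>k::int. let x = b i in {\<alpha>, \<beta>} = {shiftk k (I x), shiftk k (Id x)}"
      then obtain i k where "i \<in> {1..n-1}" "{\<alpha>, \<beta>} = {shiftk k (I (b i)), shiftk k (Id (b i))}" by (auto simp: Let_def)
      then show "neg_asymp \<alpha> \<beta>" by (rule neg_conv)
    }
  qed
  show "\<forall>x\<in>{0..<1}. \<forall>y\<in>{0<..1}. I x = Id y \<longrightarrow> x = y \<and> x \<in> R"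
    using part3 by blast
  show "fully_split_perm n \<tau> \<longrightarrow> (\<forall>\<alpha>\<in>X. \<forall>\<beta>\<in>X. doubly_asymp \<alpha> \<beta> \<longrightarrow> \<alpha> = \<beta>)"
  proof (intro impI ballI)
    fix \<alpha> \<beta> assume fsp: "fully_split_perm n \<tau>" and a: "\<alpha> \<in> X" and b: "\<beta> \<in> X" and da: "doubly_asymp \<alpha> \<beta>"
    show "\<alpha> = \<beta>"
    proof (rule ccontr)
      assume ne: "\<alpha> \<noteq> \<beta>"
      obtain m k where mk: "m \<in> {1..n-1}" "{\<alpha>, \<beta>} = {shiftk k (I (bt m)), shiftk k (Id (bt m))}"
        using pos_thm[OF Xchar[OF a] Xchar[OF b] ne] da by (auto simp: doubly_asymp_def)
      obtain N where N: "\<And>i. i \<le> - N \<Longrightarrow> \<alpha> i = \<beta> i" using da unfolding doubly_asymp_def neg_asymp_def by blast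
      have "I (bt m) j = Id (bt m) j" if j: "j \<le> - (N - k)" for j
      proof -
        have h: "\<alpha> (j - k) = \<beta> (j - k)" using N[of "j - k"] j by simp
        from mk(2) consider "\<alpha> = shiftk k (I (bt m))" "\<beta> = shiftk k (Id (bt m))"
          | "\<alpha> = shiftk k (Id (bt m))" "\<beta> = shiftk k (I (bt m))" by (auto simp: doubleton_eq_iff)
        then show ?thesis using h by cases (auto simp: shiftk_def)
      qed
      then show False using fs_contra[OF mk(1) fsp] by blast
    qed
  qed
  show "\<not> split_perm n \<tau> \<longrightarrow> (\<exists>\<alpha>\<in>X. \<exists>\<beta>\<in>X. \<alpha> \<noteq> \<beta> \<and> doubly_asymp \<alpha> \<beta>)"
  proof
    assume "\<not> split_perm n \<tau>"
    then obtain j where j: "j \<in> {1..n-1}" "I (b j) \<noteq> Id (b j)" "doubly_asymp (I (b j)) (Id (b j))"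
      using notsplit_pair by blast
    have jj: "0 < j" "j \<le> n" "j < n" using j n2 by auto
    have x: "b j \<in> {0..<1}" "b j \<in> {0<..1}" using b_lt[OF jj(1,2)] b_lt[OF jj(3) order_refl] bn by auto
    show "\<exists>\<alpha>\<in>X. \<exists>\<beta>\<in>X. \<alpha> \<noteq> \<beta> \<and> doubly_asymp \<alpha> \<beta>"
      using Xin_I[OF x(1)] Xin_Id[OF x(2)] j by blast
  qed
qed

end

theorem theorem4p5:
  fixes n :: nat and a :: "nat \<Rightarrow> real" and \<tau> :: "nat \<Rightarrow> nat"
  assumes n2: "n \<ge> 2"
    and apos: "\<forall>i\<in>{1..n}. a i > 0"
    and asum: "(\<Sum>i=1..n. a i) = 1"
    and perm: "\<tau> permutes {1..n}"
    and irr: "irreducible_perm n \<tau>"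
    and kea: "keane n a \<tau>"
  shows
    "(\<forall>\<alpha>\<in>iet_X n a \<tau>. \<forall>\<beta>\<in>iet_X n a \<tau>. \<alpha> \<noteq> \<beta> \<longrightarrow>
        (pos_asymp \<alpha> \<beta> \<longleftrightarrow>
          (\<exists>i\<in>{1..n-1}. \<exists>k::int. let x = iet_btau a \<tau> i in
             {\<alpha>, \<beta>} = {shiftk k (itin n a \<tau> x), shiftk k (itin_d n a \<tau> x)})))
   \<and> (\<forall>\<alpha>\<in>iet_X n a \<tau>. \<forall>\<beta>\<in>iet_X n a \<tau>. \<alpha> \<noteq> \<beta> \<longrightarrow>
        (neg_asymp \<alpha> \<beta> \<longleftrightarrow>
          (\<exists>i\<in>{1..n-1}. \<exists>k::int. let x = iet_b a i in
             {\<alpha>, \<beta>} = {shiftk k (itin n a \<tau> x), shiftk k (itin_d n a \<tau> x)})))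
   \<and> (\<forall>x\<in>{0..<1}. \<forall>y\<in>{0<..1}. itin n a \<tau> x = itin_d n a \<tau> y \<longrightarrow>
        x = y \<and> x \<in> iet_R n a \<tau>)
   \<and> (fully_split_perm n \<tau> \<longrightarrow>
        (\<forall>\<alpha>\<in>iet_X n a \<tau>. \<forall>\<beta>\<in>iet_X n a \<tau>. doubly_asymp \<alpha> \<beta> \<longrightarrow> \<alpha> = \<beta>))
   \<and> (\<not> split_perm n \<tau> \<longrightarrow>
        (\<exists>\<alpha>\<in>iet_X n a \<tau>. \<exists>\<beta>\<in>iet_X n a \<tau>. \<alpha> \<noteq> \<beta> \<and> doubly_asymp \<alpha> \<beta>))"
proof -
  interpret iet n a \<tau> using assms by unfold_locales
  show ?thesis by (rule main)
qed


end
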